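(* For all configurations $C, C'$ of the NFB machine, $C \approx C'$ (machine bisimilarity) if and only if $[\![C]\!] \approx_H [\![C']\!]$ (HOcore barbed equivalence with respect to the set $H = \{c, hd, b, k, init, rec, ch\}$ of hidden names).
   Context: HOcore: processes $P,Q ::= a(x).P \mid \overline{a}\langle P\rangle \mid P \parallel Q \mid x \mid 0$ ($a$ channel names, $x$ process variables, $a(x).P$ binds $x$, $a(\_).P$ when $x$ is unused, $\parallel$ associative and commutative with unit $0$, $\mathrm{fn}(P)$ the free names). LTS: $\overline{a}\langle P\rangle \xrightarrow{\overline{a}\langle P\rangle} 0$; $a(x).Q \xrightarrow{a(P)} Q\{P/x\}$; if $P \xrightarrow{l} P'$ then $P\parallel Q \xrightarrow{l} P'\parallel Q$ (and symmetrically); if $P \xrightarrow{\overline{a}\langle R\rangle} P'$ and $Q \xrightarrow{a(R)} Q'$ then $P \parallel Q \xrightarrow{\tau} P'\parallel Q'$ (and symmetrically). $\Rightarrow$ is the reflexive transitive closure of $\xrightarrow{\tau}$. For a finite set $H$: $P\downarrow^H_a$ (resp. $P\downarrow^H_{\overline a}$) if $a\notin H$ and $P\xrightarrow{a(Q)}R$ (resp. $P\xrightarrow{\overline a\langle Q\rangle}R$) for some $Q,R$; $P\Downarrow^H_\mu$ if $P\Rightarrow P'\downarrow^H_\mu$. A barbed bisimulation w.r.t. $H$ is a symmetric relation $\mathcal R$ such that $P\mathcal RQ$ implies: $P\downarrow^H_\mu$ implies $Q\Downarrow^H_\mu$; for all $R$ with $\mathrm{fn}(R)\cap H=\emptyset$,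 $(P\parallel R)\mathcal R(Q\parallel R)$; if $P\xrightarrow\tau P'$ then $Q\Rightarrow Q'$ with $P'\mathcal RQ'$. $\approx_H$ is the largest barbed bisimulation w.r.t. $H$. Terms: $t,s ::= f \mid x \mid \lambda x.t \mid t\,s$ ($f$ free variables identified with natural numbers, $x$ bound variables, terms well formed). Stacks $\pi ::= t::\pi\mid[]$. NFB machine: configurations $\langle t,\pi,n\rangle_{\mathrm{ev}}$ and $\langle \pi, n\rangle_{\mathrm{cont}}$; transitions: $\langle t\,s,\pi,n\rangle_{\mathrm{ev}} \xrightarrow{\tau} \langle t, s::\pi, n\rangle_{\mathrm{ev}}$; $\langle \lambda x.t, s::\pi, n\rangle_{\mathrm{ev}} \xrightarrow{\tau} \langle t\{s/x\},\pi,n\rangle_{\mathrm{ev}}$; $\langle \lambda x.t, [], n\rangle_{\mathrm{ev}} \xrightarrow{\lambda} \langle t\{n/x\}, [], n+1\rangle_{\mathrm{ev}}$; $\langle f, \pi, n\rangle_{\mathrm{ev}} \xrightarrow{f} \langle \pi, n\rangle_{\mathrm{cont}}$; $\langle [], n\rangle_{\mathrm{cont}} \xrightarrow{\mathsf{done}}$ (terminating); $\langle t::\pi, n\rangle_{\mathrm{cont}} \xrightarrow{\mathsf{enter}} \langle t, [], n\rangle_{\mathrm{ev}}$; $\langle t::\pi, n\rangle_{\mathrm{cont}} \xrightarrow{\mathsf{skip}} \langle \pi, n\rangle_{\mathrm{cont}}$. Machine bisimulation: symmetric $\mathcal R$ such that $C_1\mathcal RC_2$ implies for every flag $F$: if $C_1\xrightarrow\tau^*\xrightarrow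 F C_1'$ then $C_2\xrightarrow\tau^*\xrightarrow F C_2'$ with $C_1'\mathcal RC_2'$; if $C_1\xrightarrow\tau^*\xrightarrow F$ (terminating) then $C_2\xrightarrow\tau^*\xrightarrow F$ (terminating). $\approx$ is the largest machine bisimulation. Translation into HOcore, using channel names $c, hd, b, k, init, rec, ch$ and flag names $\lambda, \mathsf{enter}, \mathsf{skip}, \mathsf{done}, suc, z$ (bound $\lambda$-variables become process variables; $p$ is a fresh variable). Internal choice: $P + Q = \overline{ch}\langle P\rangle \parallel \overline{ch}\langle Q\rangle \parallel ch(x).ch(\_).x$. Numbers: $[0] = z(\_).\overline{init}\langle 0\rangle$, $[n+1] = suc(\_).[n]$. $[\![t\,s]\!] = c(p).([\![t]\!] \parallel \overline{c}\langle \overline{hd}\langle[\![s]\!]\rangle \parallel \overline{c}\langle p\rangle\rangle)$; $[\![\lambda x.t]\!] = c(p).(p \parallel \overline{b}\langle \mathit{Restart}\rangle \parallel hd(x).b(\_).[\![t]\!])$; $[\![x]\!] = x$; $[\![f]\!] = [f]$; $\mathit{Restart} = \lambda(\_).k(x).(\overline{hd}\langle x\rangle \parallel \overline{k}\langle suc(\_).x\rangle \parallel \overline{c}\langle[\![[]]\!]\rangle \parallel \overline{b}\langle 0\rangle)$; $\mathit{Rec} = init(\_).rec(x).(x \parallel \overline{rec}\langle x\rangle \parallel \mathit{Cont})$; $\mathit{Cont} = c(p).(p \parallel \overline{b}\langle \mathsf{done}(\_).0\rangle \parallel hd(x).b(\_).\mathit{Choice}(x))$; $\mathit{Choice}(P)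 = \mathsf{enter}(\_).c(\_).(P \parallel \overline{c}\langle[\![[]]\!]\rangle) + \mathsf{skip}(\_).\overline{init}\langle 0\rangle$; $[\![[]]\!] = b(x).x$; $[\![t::\pi]\!] = \overline{hd}\langle[\![t]\!]\rangle \parallel \overline{c}\langle[\![\pi]\!]\rangle$; $[\![\langle t,\pi,n\rangle_{\mathrm{ev}}]\!] = [\![t]\!] \parallel \overline{c}\langle[\![\pi]\!]\rangle \parallel \overline{k}\langle [n]\rangle \parallel \mathit{Rec} \parallel \overline{rec}\langle\mathit{Rec}\rangle$; $[\![\langle \pi,n\rangle_{\mathrm{cont}}]\!] = \overline{c}\langle[\![\pi]\!]\rangle \parallel \overline{k}\langle [n]\rangle \parallel \mathit{Cont} \parallel \mathit{Rec} \parallel \overline{rec}\langle\mathit{Rec}\rangle$. *)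

theory Defs
  imports Main
begin

text \<open>Channel names: the hidden names, the flag names, and infinitely many other names.\<close>
datatype name = NC | NHd | NB | NK | NInit | NRec | NCh
  | NLam | NEnter | NSkip | NDone | NSuc | NZ | NOther nat

text \<open>Process variables: those coming from lambda-bound variables (LV x), and the
  auxiliary variables p (VP), x (VX), the choice variable (VY) and the unused one (VU).\<close>
datatype pvar = LV nat | VP | VX | VY | VU

datatype proc = Inp name pvar proc | Out name proc | Par proc proc | Var pvar | Nil

fun psubst :: "proc \<Rightarrow> pvar \<Rightarrow> proc \<Rightarrow> proc" where
  "psubst (Inp a y Q) x P = (if y = x then Inp a y Q else Inp a y (psubst Q x P))"
| "psubst (Out a Q) x P = Out a (psubst Q x P)"
| "psubst (Par Q1 Q2) x P = Par (psubst Q1 x P) (psubst Q2 x P)"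
| "psubst (Var y) x P = (if y = x then P else Var y)"
| "psubst Nil x P = Nil"

fun fn :: "proc \<Rightarrow> name set" where
  "fn (Inp a y Q) = insert a (fn Q)"
| "fn (Out a Q) = insert a (fn Q)"
| "fn (Par Q1 Q2) = fn Q1 \<union> fn Q2"
| "fn (Var y) = {}"
| "fn Nil = {}"

fun fv :: "proc \<Rightarrow> pvar set" where
  "fv (Inp a y Q) = fv Q - {y}"
| "fv (Out a Q) = fv Q"
| "fv (Par Q1 Q2) = fv Q1 \<union> fv Q2"
| "fv (Var y) = {y}"
| "fv Nil = {}"

datatype plab = LIn name proc | LOut name proc | LTau

inductive ptrans :: "proc \<Rightarrow> plab \<Rightarrow> proc \<Rightarrow> bool" where
  out: "ptrans (Out a P) (LOut a P) Nil"
| inp: "ptrans (Inp a x Q) (LIn a P) (psubst Q x P)"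
| parL: "ptrans P l P' \<Longrightarrow> ptrans (Par P Q) l (Par P' Q)"
| parR: "ptrans Q l Q' \<Longrightarrow> ptrans (Par P Q) l (Par P Q')"
| commL: "ptrans P (LOut a R) P' \<Longrightarrow> ptrans Q (LIn a R) Q' \<Longrightarrow> ptrans (Par P Q) LTau (Par P' Q')"
| commR: "ptrans P (LIn a R) P' \<Longrightarrow> ptrans Q (LOut a R) Q' \<Longrightarrow> ptrans (Par P Q) LTau (Par P' Q')"

definition tau_star :: "proc \<Rightarrow> proc \<Rightarrow> bool" where
  "tau_star = (\<lambda>P Q. ptrans P LTau Q)\<^sup>*\<^sup>*"

datatype barb = BIn name | BOut name

definition has_barb :: "name set \<Rightarrow> proc \<Rightarrow> barb \<Rightarrow> bool" where
  "has_barb H P \<mu> = (case \<mu> of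
      BIn a \<Rightarrow> a \<notin> H \<and> (\<exists>Q R. ptrans P (LIn a Q) R)
    | BOut a \<Rightarrow> a \<notin> H \<and> (\<exists>Q R. ptrans P (LOut a Q) R))"

definition weak_barb :: "name set \<Rightarrow> proc \<Rightarrow> barb \<Rightarrow> bool" where
  "weak_barb H P \<mu> = (\<exists>P'. tau_star P P' \<and> has_barb H P' \<mu>)"

definition barbed_bisim :: "name set \<Rightarrow> (proc \<Rightarrow> proc \<Rightarrow> bool) \<Rightarrow> bool" where
  "barbed_bisim H Rel = (symp Rel \<and> (\<forall>P Q. Rel P Q \<longrightarrow>
      (\<forall>\<mu>. has_barb H P \<mu> \<longrightarrow> weak_barb H Q \<mu>) \<and>
      (\<forall>R. fn R \<inter> H = {} \<and> fv R = {} \<longrightarrow> Rel (Par P R) (Par Q R)) \<and>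
      (\<forall>P'. ptrans P LTau P' \<longrightarrow> (\<exists>Q'. tau_star Q Q' \<and> Rel P' Q'))))"

definition barbed_equiv :: "name set \<Rightarrow> proc \<Rightarrow> proc \<Rightarrow> bool" where
  "barbed_equiv H P Q = (\<exists>Rel. barbed_bisim H Rel \<and> Rel P Q)"

datatype lterm = FV nat | BV nat | Lam nat lterm | App lterm lterm

fun tsubst :: "lterm \<Rightarrow> nat \<Rightarrow> lterm \<Rightarrow> lterm" where
  "tsubst (FV f) x s = FV f"
| "tsubst (BV y) x s = (if y = x then s else BV y)"
| "tsubst (Lam y t) x s = (if y = x then Lam y t else Lam y (tsubst t x s))"
| "tsubst (App t1 t2) x s = App (tsubst t1 x s) (tsubst t2 x s)"

fun bvs_free :: "lterm \<Rightarrow> nat set" where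
  "bvs_free (FV f) = {}"
| "bvs_free (BV y) = {y}"
| "bvs_free (Lam y t) = bvs_free t - {y}"
| "bvs_free (App t1 t2) = bvs_free t1 \<union> bvs_free t2"

definition wf_term :: "lterm \<Rightarrow> bool" where
  "wf_term t = (bvs_free t = {})"

datatype conf = Ev lterm "lterm list" nat | Co "lterm list" nat

definition wf_conf :: "conf \<Rightarrow> bool" where
  "wf_conf C = (case C of
      Ev t \<pi> n \<Rightarrow> wf_term t \<and> (\<forall>s \<in> set \<pi>. wf_term s)
    | Co \<pi> n \<Rightarrow> (\<forall>s \<in> set \<pi>. wf_term s))"

datatype flag = FLam | FFree nat | FDone | FEnter | FSkip

inductive mtau :: "conf \<Rightarrow> conf \<Rightarrow> bool" where
  "mtau (Ev (App t s) \<pi> n) (Ev t (s # \<pi>) n)"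
| "mtau (Ev (Lam x t) (s # \<pi>) n) (Ev (tsubst t x s) \<pi> n)"

inductive mstep :: "conf \<Rightarrow> flag \<Rightarrow> conf \<Rightarrow> bool" where
  "mstep (Ev (Lam x t) [] n) FLam (Ev (tsubst t x (FV n)) [] (Suc n))"
| "mstep (Ev (FV f) \<pi> n) (FFree f) (Co \<pi> n)"
| "mstep (Co (t # \<pi>) n) FEnter (Ev t [] n)"
| "mstep (Co (t # \<pi>) n) FSkip (Co \<pi> n)"

inductive mterm :: "conf \<Rightarrow> flag \<Rightarrow> bool" where
  "mterm (Co [] n) FDone"

definition mach_bisim :: "(conf \<Rightarrow> conf \<Rightarrow> bool) \<Rightarrow> bool" where
  "mach_bisim Rel = (symp Rel \<and> (\<forall>C1 C2. Rel C1 C2 \<longrightarrow> (\<forall>F.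
      (\<forall>C1'. (\<exists>D. mtau\<^sup>*\<^sup>* C1 D \<and> mstep D F C1') \<longrightarrow>
          (\<exists>C2'. (\<exists>D. mtau\<^sup>*\<^sup>* C2 D \<and> mstep D F C2') \<and> Rel C1' C2')) \<and>
      ((\<exists>D. mtau\<^sup>*\<^sup>* C1 D \<and> mterm D F) \<longrightarrow> (\<exists>D. mtau\<^sup>*\<^sup>* C2 D \<and> mterm D F)))))"

definition mach_bisimilar :: "conf \<Rightarrow> conf \<Rightarrow> bool" where
  "mach_bisimilar C1 C2 = (\<exists>Rel. mach_bisim Rel \<and> Rel C1 C2)"

definition plus :: "proc \<Rightarrow> proc \<Rightarrow> proc" where
  "plus P Q = Par (Out NCh P) (Par (Out NCh Q) (Inp NCh VY (Inp NCh VU (Var VY))))"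

fun num :: "nat \<Rightarrow> proc" where
  "num 0 = Inp NZ VU (Out NInit Nil)"
| "num (Suc n) = Inp NSuc VU (num n)"

definition stk_nil :: proc where
  "stk_nil = Inp NB VX (Var VX)"

definition Restart :: proc where
  "Restart = Inp NLam VU (Inp NK VX
     (Par (Out NHd (Var VX)) (Par (Out NK (Inp NSuc VU (Var VX)))
        (Par (Out NC stk_nil) (Out NB Nil)))))"

fun trm :: "lterm \<Rightarrow> proc" where
  "trm (App t s) = Inp NC VP (Par (trm t) (Out NC (Par (Out NHd (trm s)) (Out NC (Var VP)))))"
| "trm (Lam x t) = Inp NC VP (Par (Var VP) (Par (Out NB Restart) (Inp NHd (LV x) (Inp NB VU (trm t)))))"
| "trm (BV x) = Var (LV x)"
| "trm (FV f) = num f"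

definition Choice :: "proc \<Rightarrow> proc" where
  "Choice P = plus (Inp NEnter VU (Inp NC VU (Par P (Out NC stk_nil))))
                   (Inp NSkip VU (Out NInit Nil))"

definition ContP :: proc where
  "ContP = Inp NC VP (Par (Var VP) (Par (Out NB (Inp NDone VU Nil))
              (Inp NHd VX (Inp NB VU (Choice (Var VX))))))"

definition RecP :: proc where
  "RecP = Inp NInit VU (Inp NRec VX (Par (Var VX) (Par (Out NRec (Var VX)) ContP)))"

fun stk :: "lterm list \<Rightarrow> proc" where
  "stk [] = stk_nil"
| "stk (t # \<pi>) = Par (Out NHd (trm t)) (Out NC (stk \<pi>))"

fun tr_conf :: "conf \<Rightarrow> proc" where
  "tr_conf (Ev t \<pi> n) = Par (trm t) (Par (Out NC (stk \<pi>)) (Par (Out NK (num n)) (Par RecP (Out NRec RecP))))"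
| "tr_conf (Co \<pi> n) = Par (Out NC (stk \<pi>)) (Par (Out NK (num n)) (Par ContP (Par RecP (Out NRec RecP))))"

definition Hidden :: "name set" where
  "Hidden = {NC, NHd, NB, NK, NInit, NRec, NCh}"

end

theory Submission
  imports Defs "HOL-Library.Multiset"
begin


fun comps :: "proc \<Rightarrow> proc multiset" where
  "comps (Par P Q) = comps P + comps Q"
| "comps Nil = {#}"
| "comps P = {#P#}"

fun ms :: "proc multiset \<Rightarrow> plab \<Rightarrow> proc multiset \<Rightarrow> bool" where
  "ms M (LOut a X) M' = (Out a X \<in># M \<and> M' = M - {#Out a X#})"
| "ms M (LIn a X) M' = (\<exists>y Q. Inp a y Q \<in># M \<and> M' = M - {#Inp a y Q#} + comps (psubst Q y X))"
| "ms M LTau M' = (\<exists>a X y Q. Out a X \<in># M \<and> Inp a y Q \<in># M \<and>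
      M' = M - {#Out a X, Inp a y Q#} + comps (psubst Q y X))"

lemma mset_diff_plus_l: "x \<in># A \<Longrightarrow> A + B - {#x#} = (A - {#x#}) + B"
  unfolding multiset_eq_iff by (auto simp: count_greater_zero_iff[symmetric] simp del: count_greater_zero_iff)
lemma mset_diff_plus_r: "x \<in># B \<Longrightarrow> A + B - {#x#} = A + (B - {#x#})"
  unfolding multiset_eq_iff by (auto simp: count_greater_zero_iff[symmetric] simp del: count_greater_zero_iff)
lemma diff2_l: "u \<noteq> i \<Longrightarrow> u \<in># A \<Longrightarrow> i \<in># A \<Longrightarrow> A + B - {#u, i#} = (A - {#u, i#}) + B"
  unfolding multiset_eq_iff by (auto simp: count_greater_zero_iff[symmetric] simp del: count_greater_zero_iff)
lemma diff2_r: "u \<noteq> i \<Longrightarrow> u \<in># B \<Longrightarrow> i \<in># B \<Longrightarrow> A + B - {#u, i#} = A + (B - {#u, i#})"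
  unfolding multiset_eq_iff by (auto simp: count_greater_zero_iff[symmetric] simp del: count_greater_zero_iff)
lemma diff2_lr: "u \<in># A \<Longrightarrow> i \<in># B \<Longrightarrow> A + B - {#u, i#} = (A - {#u#}) + (B - {#i#})"
  unfolding multiset_eq_iff by (auto simp: count_greater_zero_iff[symmetric] simp del: count_greater_zero_iff)
lemma diff2_rl: "u \<in># B \<Longrightarrow> i \<in># A \<Longrightarrow> A + B - {#u, i#} = (A - {#i#}) + (B - {#u#})"
  unfolding multiset_eq_iff by (auto simp: count_greater_zero_iff[symmetric] simp del: count_greater_zero_iff)

lemma ptrans_ms: "ptrans P l P' \<Longrightarrow> ms (comps P) l (comps P')"
proof (induction rule: ptrans.induct)
  case (out a P) then show ?case by simp
next
  case (inp a x Q P) then show ?case by auto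
next
  case (parL P l P' Q)
  then show ?case
  proof (cases l)
    case (LIn a X)
    with parL obtain y R where h: "Inp a y R \<in># comps P" "comps P' = comps P - {#Inp a y R#} + comps (psubst R y X)" by auto
    show ?thesis unfolding LIn ms.simps comps.simps
      apply (rule exI[of _ y], rule exI[of _ R]) using h by (auto simp: multiset_eq_iff count_greater_zero_iff[symmetric] simp del: count_greater_zero_iff)
  next
    case (LOut a X) with parL show ?thesis by (auto simp: multiset_eq_iff count_greater_zero_iff[symmetric] simp del: count_greater_zero_iff)
  next
    case LTau
    with parL obtain a X y R where h: "Out a X \<in># comps P" "Inp a y R \<in># comps P"
       "comps P' = comps P - {#Out a X, Inp a y R#} + comps (psubst R y X)" by auto
    show ?thesis unfolding LTau ms.simps comps.simps
      apply (rule exI[of _ a], rule exI[of _ X], rule exI[of _ y], rule exI[of _ R]) using h by (auto simp: multiset_eq_iff count_greater_zero_iff[symmetric] simp del: count_greater_zero_iff)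
  qed
next
  case (parR Q l Q' P)
  then show ?case
  proof (cases l)
    case (LIn a X)
    with parR obtain y R where h: "Inp a y R \<in># comps Q" "comps Q' = comps Q - {#Inp a y R#} + comps (psubst R y X)" by auto
    show ?thesis unfolding LIn ms.simps comps.simps
      apply (rule exI[of _ y], rule exI[of _ R]) using h by (auto simp: multiset_eq_iff count_greater_zero_iff[symmetric] simp del: count_greater_zero_iff)
  next
    case (LOut a X) with parR show ?thesis by (auto simp: multiset_eq_iff count_greater_zero_iff[symmetric] simp del: count_greater_zero_iff)
  next
    case LTau
    with parR obtain a X y R where h: "Out a X \<in># comps Q" "Inp a y R \<in># comps Q"
       "comps Q' = comps Q - {#Out a X, Inp a y R#} + comps (psubst R y X)" by auto
    show ?thesis unfolding LTau ms.simps comps.simps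
      apply (rule exI[of _ a], rule exI[of _ X], rule exI[of _ y], rule exI[of _ R]) using h by (auto simp: multiset_eq_iff count_greater_zero_iff[symmetric] simp del: count_greater_zero_iff)
  qed
next
  case (commL P a R P' Q Q')
  then obtain y S where h: "Inp a y S \<in># comps Q" "comps Q' = comps Q - {#Inp a y S#} + comps (psubst S y R)" by auto
  show ?case unfolding ms.simps comps.simps
      apply (rule exI[of _ a], rule exI[of _ R], rule exI[of _ y], rule exI[of _ S]) using h commL by (auto simp: multiset_eq_iff count_greater_zero_iff[symmetric] simp del: count_greater_zero_iff)
next
  case (commR P a R P' Q Q')
  then obtain y S where h: "Inp a y S \<in># comps P" "comps P' = comps P - {#Inp a y S#} + comps (psubst S y R)" by auto
  show ?case unfolding ms.simps comps.simps
      apply (rule exI[of _ a], rule exI[of _ R], rule exI[of _ y], rule exI[of _ S]) using h commR by (auto simp: multiset_eq_iff count_greater_zero_iff[symmetric] simp del: count_greater_zero_iff)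
qed


lemma ms_ptrans: "ms (comps P) l M' \<Longrightarrow> \<exists>P'. ptrans P l P' \<and> comps P' = M'"
proof (induction P arbitrary: l M')
  case (Inp a x Q)
  then show ?case
  proof (cases l)
    case (LIn b X) with Inp show ?thesis by (auto intro: ptrans.inp)
  qed auto
next
  case (Out a Q)
  then show ?case
  proof (cases l)
    case (LOut b X) with Out show ?thesis by (auto intro: ptrans.out)
  qed auto
next
  case (Var x) then show ?case by (cases l) auto
next
  case Nil then show ?case by (cases l) auto
next
  case (Par P1 P2)
  show ?case
  proof (cases l)
    case (LIn a X)
    from Par.prems[unfolded LIn ms.simps comps.simps] obtain y R where h: "Inp a y R \<in># comps P1 + comps P2"
      "M' = comps P1 + comps P2 - {#Inp a y R#} + comps (psubst R y X)" by blast
    show ?thesis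
    proof (cases "Inp a y R \<in># comps P1")
      case True
      then have "ms (comps P1) (LIn a X) (comps P1 - {#Inp a y R#} + comps (psubst R y X))" by (simp_all only: ms.simps; blast)
      then obtain P1' where "ptrans P1 (LIn a X) P1'" "comps P1' = comps P1 - {#Inp a y R#} + comps (psubst R y X)"
        using Par.IH(1) by blast
      then show ?thesis using h True LIn
        by (intro exI[of _ "Par P1' P2"]) (auto intro: ptrans.parL simp: multiset_eq_iff count_greater_zero_iff[symmetric] simp del: count_greater_zero_iff)
    next
      case False
      then have T: "Inp a y R \<in># comps P2" using h by auto
      then have "ms (comps P2) (LIn a X) (comps P2 - {#Inp a y R#} + comps (psubst R y X))" by (simp_all only: ms.simps; blast)
      then obtain P2' where "ptrans P2 (LIn a X) P2'" "comps P2' = comps P2 - {#Inp a y R#} + comps (psubst R y X)"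
        using Par.IH(2) by blast
      then show ?thesis using h T LIn
        by (intro exI[of _ "Par P1 P2'"]) (auto intro: ptrans.parR simp: multiset_eq_iff count_greater_zero_iff[symmetric] simp del: count_greater_zero_iff)
    qed
  next
    case (LOut a X)
    note pp = Par.prems[unfolded LOut ms.simps comps.simps]
    from pp have h: "Out a X \<in># comps P1 + comps P2" "M' = comps P1 + comps P2 - {#Out a X#}" by blast+
    show ?thesis
    proof (cases "Out a X \<in># comps P1")
      case True
      then have "ms (comps P1) (LOut a X) (comps P1 - {#Out a X#})" by (simp_all only: ms.simps; blast)
      then obtain P1' where "ptrans P1 (LOut a X) P1'" "comps P1' = comps P1 - {#Out a X#}"
        using Par.IH(1) by blast
      then show ?thesis using h True LOut
        by (intro exI[of _ "Par P1' P2"]) (auto intro: ptrans.parL simp: multiset_eq_iff count_greater_zero_iff[symmetric] simp del: count_greater_zero_iff)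
    next
      case False
      then have T: "Out a X \<in># comps P2" using h by auto
      then have "ms (comps P2) (LOut a X) (comps P2 - {#Out a X#})" by (simp_all only: ms.simps; blast)
      then obtain P2' where "ptrans P2 (LOut a X) P2'" "comps P2' = comps P2 - {#Out a X#}"
        using Par.IH(2) by blast
      then show ?thesis using h T LOut
        by (intro exI[of _ "Par P1 P2'"]) (auto intro: ptrans.parR simp: multiset_eq_iff count_greater_zero_iff[symmetric] simp del: count_greater_zero_iff)
    qed
  next
    case LTau
    from Par.prems[unfolded LTau ms.simps comps.simps] obtain a X y R where h: "Out a X \<in># comps P1 + comps P2" "Inp a y R \<in># comps P1 + comps P2"
      "M' = comps P1 + comps P2 - {#Out a X, Inp a y R#} + comps (psubst R y X)" by blast
    consider "Out a X \<in># comps P1" "Inp a y R \<in># comps P1" | "Out a X \<in># comps P1" "Inp a y R \<in># comps P2"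
      | "Out a X \<in># comps P2" "Inp a y R \<in># comps P1" | "Out a X \<in># comps P2" "Inp a y R \<in># comps P2"
      using h by auto
    then show ?thesis
    proof cases
      case 1
      then have "ms (comps P1) LTau (comps P1 - {#Out a X, Inp a y R#} + comps (psubst R y X))" by (simp_all only: ms.simps; blast)
      then obtain P1' where "ptrans P1 LTau P1'" "comps P1' = comps P1 - {#Out a X, Inp a y R#} + comps (psubst R y X)"
        using Par.IH(1) by blast
      then show ?thesis using h 1 LTau
        by (intro exI[of _ "Par P1' P2"]) (auto intro: ptrans.parL simp: multiset_eq_iff count_greater_zero_iff[symmetric] simp del: count_greater_zero_iff)
    next
      case 4
      then have "ms (comps P2) LTau (comps P2 - {#Out a X, Inp a y R#} + comps (psubst R y X))" by (simp_all only: ms.simps; blast)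
      then obtain P2' where "ptrans P2 LTau P2'" "comps P2' = comps P2 - {#Out a X, Inp a y R#} + comps (psubst R y X)"
        using Par.IH(2) by blast
      then show ?thesis using h 4 LTau
        by (intro exI[of _ "Par P1 P2'"]) (auto intro: ptrans.parR simp: multiset_eq_iff count_greater_zero_iff[symmetric] simp del: count_greater_zero_iff)
    next
      case 2
      from 2 have "ms (comps P1) (LOut a X) (comps P1 - {#Out a X#})" by simp
      moreover from 2 have "ms (comps P2) (LIn a X) (comps P2 - {#Inp a y R#} + comps (psubst R y X))" by (simp only: ms.simps; blast)
      ultimately obtain P1' P2' where "ptrans P1 (LOut a X) P1'" "comps P1' = comps P1 - {#Out a X#}"
        "ptrans P2 (LIn a X) P2'" "comps P2' = comps P2 - {#Inp a y R#} + comps (psubst R y X)"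
        using Par.IH by blast
      then show ?thesis using h 2 LTau
        by (intro exI[of _ "Par P1' P2'"]) (auto intro: ptrans.commL simp: multiset_eq_iff count_greater_zero_iff[symmetric] simp del: count_greater_zero_iff)
    next
      case 3
      from 3 have "ms (comps P2) (LOut a X) (comps P2 - {#Out a X#})" by simp
      moreover from 3 have "ms (comps P1) (LIn a X) (comps P1 - {#Inp a y R#} + comps (psubst R y X))" by (simp only: ms.simps; blast)
      ultimately obtain P1' P2' where "ptrans P2 (LOut a X) P2'" "comps P2' = comps P2 - {#Out a X#}"
        "ptrans P1 (LIn a X) P1'" "comps P1' = comps P1 - {#Inp a y R#} + comps (psubst R y X)"
        using Par.IH by blast
      then show ?thesis using h 3 LTau
        by (intro exI[of _ "Par P1' P2'"]) (auto intro: ptrans.commR simp: multiset_eq_iff count_greater_zero_iff[symmetric] simp del: count_greater_zero_iff)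
    qed
  qed
qed



declare ms.simps[simp del]

definition mt :: "proc multiset \<Rightarrow> proc multiset \<Rightarrow> bool" where
  "mt M M' = ms M LTau M'"

definition mbarb :: "name set \<Rightarrow> proc multiset \<Rightarrow> barb \<Rightarrow> bool" where
  "mbarb H M \<mu> = (case \<mu> of
      BIn a \<Rightarrow> a \<notin> H \<and> (\<exists>y Q. Inp a y Q \<in># M)
    | BOut a \<Rightarrow> a \<notin> H \<and> (\<exists>X. Out a X \<in># M))"

lemma has_barb_mbarb: "has_barb H P \<mu> \<longleftrightarrow> mbarb H (comps P) \<mu>"
proof (cases \<mu>)
  case (BIn a)
  have "(\<exists>Q R. ptrans P (LIn a Q) R) \<longleftrightarrow> (\<exists>y Q. Inp a y Q \<in># comps P)"
  proof
    assume "\<exists>Q R. ptrans P (LIn a Q) R"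
    then obtain Q R where "ptrans P (LIn a Q) R" by blast
    from ptrans_ms[OF this] show "\<exists>y Q. Inp a y Q \<in># comps P" unfolding ms.simps by blast
  next
    assume "\<exists>y Q. Inp a y Q \<in># comps P"
    then obtain y Q where "Inp a y Q \<in># comps P" by blast
    then have "ms (comps P) (LIn a Nil) (comps P - {#Inp a y Q#} + comps (psubst Q y Nil))" unfolding ms.simps by blast
    from ms_ptrans[OF this] show "\<exists>Q R. ptrans P (LIn a Q) R" by blast
  qed
  then show ?thesis using BIn by (simp add: has_barb_def mbarb_def)
next
  case (BOut a)
  have "(\<exists>Q R. ptrans P (LOut a Q) R) \<longleftrightarrow> (\<exists>X. Out a X \<in># comps P)"
  proof
    assume "\<exists>Q R. ptrans P (LOut a Q) R"
    then obtain Q R where "ptrans P (LOut a Q) R" by blast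
    from ptrans_ms[OF this] show "\<exists>X. Out a X \<in># comps P" unfolding ms.simps by blast
  next
    assume "\<exists>X. Out a X \<in># comps P"
    then obtain X where "Out a X \<in># comps P" by blast
    then have "ms (comps P) (LOut a X) (comps P - {#Out a X#})" unfolding ms.simps by blast
    from ms_ptrans[OF this] show "\<exists>Q R. ptrans P (LOut a Q) R" by blast
  qed
  then show ?thesis using BOut by (simp add: has_barb_def mbarb_def)
qed

lemma tau_star_mt: "tau_star P P' \<Longrightarrow> mt\<^sup>*\<^sup>* (comps P) (comps P')"
  unfolding tau_star_def
  by (induction rule: rtranclp_induct) (auto dest: ptrans_ms simp: mt_def intro: rtranclp.rtrancl_into_rtrancl)

lemma mt_tau_star: "mt\<^sup>*\<^sup>* M M' \<Longrightarrow> comps P = M \<Longrightarrow> \<exists>P'. tau_star P P' \<and> comps P' = M'"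
proof (induction rule: rtranclp_induct)
  case base then show ?case by (auto simp: tau_star_def)
next
  case (step M1 M2)
  then obtain P1 where "tau_star P P1" "comps P1 = M1" by blast
  with step(2) obtain P2 where "ptrans P1 LTau P2" "comps P2 = M2" using ms_ptrans unfolding mt_def by blast
  then show ?case using \<open>tau_star P P1\<close> by (auto simp: tau_star_def intro: rtranclp.rtrancl_into_rtrancl)
qed

lemma weak_barb_m: "weak_barb H P \<mu> \<longleftrightarrow> (\<exists>M'. mt\<^sup>*\<^sup>* (comps P) M' \<and> mbarb H M' \<mu>)"
  unfolding weak_barb_def has_barb_mbarb
  by (metis mt_tau_star tau_star_mt)

lemma ms_frame: "ms M l M' \<Longrightarrow> ms (M + K) l (M' + K)"
proof (cases l)
  case (LIn a X)
  assume "ms M l M'"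
  then obtain y Q where h: "Inp a y Q \<in># M" "M' = M - {#Inp a y Q#} + comps (psubst Q y X)" using LIn by (simp only: ms.simps) blast
  show ?thesis unfolding LIn ms.simps apply (rule exI[of _ y], rule exI[of _ Q]) using h by (auto simp: multiset_eq_iff count_greater_zero_iff[symmetric] simp del: count_greater_zero_iff)
next
  case (LOut a X)
  assume "ms M l M'"
  then show ?thesis unfolding LOut ms.simps by (auto simp: multiset_eq_iff count_greater_zero_iff[symmetric] simp del: count_greater_zero_iff)
next
  case LTau
  assume "ms M l M'"
  then obtain a X y Q where h: "Out a X \<in># M" "Inp a y Q \<in># M" "M' = M - {#Out a X, Inp a y Q#} + comps (psubst Q y X)" using LTau by (simp only: ms.simps) blast
  show ?thesis unfolding LTau ms.simps apply (rule exI[of _ a], rule exI[of _ X], rule exI[of _ y], rule exI[of _ Q]) using h by (auto simp: multiset_eq_iff count_greater_zero_iff[symmetric] simp del: count_greater_zero_iff)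
qed

lemma mt_star_frame: "mt\<^sup>*\<^sup>* M M' \<Longrightarrow> mt\<^sup>*\<^sup>* (M + K) (M' + K)"
  by (induction rule: rtranclp_induct) (auto dest: ms_frame[where K=K] simp: mt_def intro: rtranclp.rtrancl_into_rtrancl)

lemma mt_star_frame_l: "mt\<^sup>*\<^sup>* M M' \<Longrightarrow> mt\<^sup>*\<^sup>* (K + M) (K + M')"
  using mt_star_frame[of M M' K] by (simp add: add.commute)

lemma fv_psubst: "fv (psubst Q x P) \<subseteq> (fv Q - {x}) \<union> fv P"
  by (induction Q) auto

lemma fn_psubst: "fn (psubst Q x P) \<subseteq> fn Q \<union> fn P"
  by (induction Q) auto

lemma psubst_nofv: "x \<notin> fv Q \<Longrightarrow> psubst Q x P = Q"
  by (induction Q) auto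

lemma comps_fv: "p \<in># comps P \<Longrightarrow> fv p \<subseteq> fv P"
  by (induction P rule: comps.induct) auto

lemma comps_fn: "p \<in># comps P \<Longrightarrow> fn p \<subseteq> fn P"
  by (induction P rule: comps.induct) auto

definition sysinv :: "name set \<Rightarrow> proc multiset \<Rightarrow> bool" where
  "sysinv H M = (\<forall>p\<in>#M. fv p = {} \<and> (\<forall>a X. p = Out a X \<longrightarrow> a \<in> H))"

definition ctxm :: "name set \<Rightarrow> proc multiset \<Rightarrow> bool" where
  "ctxm H K = (\<forall>p\<in>#K. fv p = {} \<and> fn p \<inter> H = {})"

definition sysbisim :: "name set \<Rightarrow> (proc multiset \<Rightarrow> proc multiset \<Rightarrow> bool) \<Rightarrow> bool" where
  "sysbisim H S = (symp S \<and> (\<forall>M1 M2. S M1 M2 \<longrightarrow> sysinv H M1 \<and>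
     (\<forall>M1'. mt M1 M1' \<longrightarrow> (\<exists>M2'. mt\<^sup>*\<^sup>* M2 M2' \<and> S M1' M2')) \<and>
     (\<forall>a X M1'. a \<notin> H \<longrightarrow> fv X = {} \<longrightarrow> ms M1 (LIn a X) M1' \<longrightarrow>
         (\<exists>M2a M2'. mt\<^sup>*\<^sup>* M2 M2a \<and> ms M2a (LIn a X) M2' \<and> S M1' M2'))))"

definition liftrel :: "name set \<Rightarrow> (proc multiset \<Rightarrow> proc multiset \<Rightarrow> bool) \<Rightarrow> proc \<Rightarrow> proc \<Rightarrow> bool" where
  "liftrel H S P Q = (\<exists>K M1 M2. comps P = K + M1 \<and> comps Q = K + M2 \<and> ctxm H K \<and> S M1 M2)"

lemma ctxm_comps: "fn R \<inter> H = {} \<Longrightarrow> fv R = {} \<Longrightarrow> ctxm H (comps R)"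
  unfolding ctxm_def using comps_fv comps_fn by blast

lemma ctxm_plus: "ctxm H A \<Longrightarrow> ctxm H B \<Longrightarrow> ctxm H (A + B)"
  unfolding ctxm_def by auto

lemma ctxm_diff: "ctxm H A \<Longrightarrow> ctxm H (A - B)"
  unfolding ctxm_def by (meson in_diffD)

lemma comps_subst_closed:
  assumes "fv (Inp a y R) = {}" "fv X = {}" "p \<in># comps (psubst R y X)"
  shows "fv p = {}"
  using assms comps_fv[OF assms(3)] fv_psubst[of R y X] by auto

lemma liftrel_bisim:
  assumes S: "sysbisim H S"
  shows "barbed_bisim H (liftrel H S)"
  unfolding barbed_bisim_def
proof (intro conjI allI impI)
  show "symp (liftrel H S)"
    using S unfolding sysbisim_def symp_def liftrel_def by metis
next
  fix P Q assume "liftrel H S P Q"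
  then obtain K M1 M2 where PQ: "comps P = K + M1" "comps Q = K + M2" "ctxm H K" "S M1 M2"
    unfolding liftrel_def by blast
  have inv: "sysinv H M1" using S PQ(4) unfolding sysbisim_def by blast
  {
    fix \<mu> assume "has_barb H P \<mu>"
    then have mb: "mbarb H (K + M1) \<mu>" using PQ by (simp add: has_barb_mbarb)
    show "weak_barb H Q \<mu>"
    proof (cases \<mu>)
      case (BIn a)
      with mb obtain y R where a: "a \<notin> H" "Inp a y R \<in># K + M1" by (auto simp: mbarb_def)
      show ?thesis
      proof (cases "Inp a y R \<in># K")
        case True
        then have "mbarb H (comps Q) \<mu>" using PQ a BIn by (auto simp: mbarb_def)
        then show ?thesis unfolding weak_barb_m by blast
      next
        case False
        then have "Inp a y R \<in># M1" using a by auto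
        then have ms1: "ms M1 (LIn a Nil) (M1 - {#Inp a y R#} + comps (psubst R y Nil))" unfolding ms.simps by blast
        have all: "\<forall>a X M1'. a \<notin> H \<longrightarrow> fv X = {} \<longrightarrow> ms M1 (LIn a X) M1' \<longrightarrow>
         (\<exists>M2a M2'. mt\<^sup>*\<^sup>* M2 M2a \<and> ms M2a (LIn a X) M2' \<and> S M1' M2')"
          using S PQ(4) unfolding sysbisim_def by blast
        from all[rule_format, of a Nil, OF a(1) _ ms1] obtain M2a M2' where "mt\<^sup>*\<^sup>* M2 M2a" "ms M2a (LIn a Nil) M2'"
          by auto
        then obtain y' R' where "Inp a y' R' \<in># M2a" unfolding ms.simps by blast
        then have "mbarb H (K + M2a) \<mu>" using a BIn by (auto simp: mbarb_def)
        moreover have "mt\<^sup>*\<^sup>* (comps Q) (K + M2a)" using PQ(2) mt_star_frame_l[OF \<open>mt\<^sup>*\<^sup>* M2 M2a\<close>] by simp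
        ultimately show ?thesis unfolding weak_barb_m by blast
      qed
    next
      case (BOut a)
      with mb obtain X where a: "a \<notin> H" "Out a X \<in># K + M1" by (auto simp: mbarb_def)
      then have "Out a X \<in># K" using inv unfolding sysinv_def by auto
      then have "mbarb H (comps Q) \<mu>" using PQ a BOut by (auto simp: mbarb_def)
      then show ?thesis unfolding weak_barb_m by blast
    qed
  }
  {
    fix R assume R: "fn R \<inter> H = {} \<and> fv R = {}"
    show "liftrel H S (Par P R) (Par Q R)"
      unfolding liftrel_def
      apply (rule exI[of _ "K + comps R"], rule exI[of _ M1], rule exI[of _ M2])
      using PQ ctxm_plus[OF PQ(3) ctxm_comps[of R H]] R by (auto simp: ac_simps)
  }
  {
    fix P' assume "ptrans P LTau P'"
    from ptrans_ms[OF this] PQ(1) have "ms (K + M1) LTau (comps P')" by simp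
    then obtain a X y R where h: "Out a X \<in># K + M1" "Inp a y R \<in># K + M1"
      "comps P' = K + M1 - {#Out a X, Inp a y R#} + comps (psubst R y X)" by (simp only: ms.simps) blast
    consider "Out a X \<in># K" "Inp a y R \<in># K" | "Out a X \<in># M1" "Inp a y R \<in># M1"
      | "Out a X \<in># K" "Inp a y R \<in># M1" "\<not> Inp a y R \<in># K" | "Out a X \<in># M1" "Inp a y R \<in># K" "\<not> Out a X \<in># K"
      using h by auto
    then show "\<exists>Q'. tau_star Q Q' \<and> liftrel H S P' Q'"
    proof cases
      case 1
      define K' where "K' = K - {#Out a X, Inp a y R#} + comps (psubst R y X)"
      have "ctxm H K'"
      proof -
        have c1: "fv (Out a X) = {}" "fv (Inp a y R) = {}" "fn (Inp a y R) \<inter> H = {}" "fn (Out a X) \<inter> H = {}"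
          using PQ(3) 1 unfolding ctxm_def by blast+
        have "ctxm H (comps (psubst R y X))" unfolding ctxm_def
        proof
          fix p assume p: "p \<in># comps (psubst R y X)"
          show "fv p = {} \<and> fn p \<inter> H = {}"
            using comps_subst_closed[OF c1(2) _ p] c1 comps_fn[OF p] fn_psubst[of R y X] by auto
        qed
        then show ?thesis unfolding K'_def by (intro ctxm_plus ctxm_diff PQ(3))
      qed
      have "comps P' = K' + M1" using h 1 unfolding K'_def by (auto simp: multiset_eq_iff count_greater_zero_iff[symmetric] simp del: count_greater_zero_iff)
      moreover have "ms (K + M2) LTau (K' + M2)" unfolding ms.simps K'_def
        apply (rule exI[of _ a], rule exI[of _ X], rule exI[of _ y], rule exI[of _ R]) using 1 by (auto simp: multiset_eq_iff count_greater_zero_iff[symmetric] simp del: count_greater_zero_iff)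
      then obtain Q' where "ptrans Q LTau Q'" "comps Q' = K' + M2" using ms_ptrans PQ(2) by metis
      ultimately show ?thesis using \<open>ctxm H K'\<close> PQ(4) unfolding liftrel_def tau_star_def by blast
    next
      case 2
      define M1' where "M1' = M1 - {#Out a X, Inp a y R#} + comps (psubst R y X)"
      have "mt M1 M1'" unfolding mt_def ms.simps M1'_def using 2 by blast
      then obtain M2' where "mt\<^sup>*\<^sup>* M2 M2'" "S M1' M2'" using S PQ(4) unfolding sysbisim_def by blast
      then have "mt\<^sup>*\<^sup>* (comps Q) (K + M2')" using PQ(2) mt_star_frame_l by metis
      then obtain Q' where "tau_star Q Q'" "comps Q' = K + M2'" using mt_tau_star by blast
      moreover have "comps P' = K + M1'" using h 2 unfolding M1'_def by (auto simp: multiset_eq_iff count_greater_zero_iff[symmetric] simp del: count_greater_zero_iff)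
      ultimately show ?thesis using PQ(3) \<open>S M1' M2'\<close> unfolding liftrel_def by blast
    next
      case 3
      have aH: "a \<notin> H" "fv X = {}" using PQ(3) 3 unfolding ctxm_def by auto
      define M1' where "M1' = M1 - {#Inp a y R#} + comps (psubst R y X)"
      have "ms M1 (LIn a X) M1'" unfolding ms.simps M1'_def using 3 by blast
      then obtain M2a M2' where m2: "mt\<^sup>*\<^sup>* M2 M2a" "ms M2a (LIn a X) M2'" "S M1' M2'"
        using S PQ(4) aH unfolding sysbisim_def by blast
      then obtain y' R' where i': "Inp a y' R' \<in># M2a" "M2' = M2a - {#Inp a y' R'#} + comps (psubst R' y' X)"
        by (simp only: ms.simps) blast
      have "mt\<^sup>*\<^sup>* (comps Q) (K + M2a)" using PQ(2) mt_star_frame_l[OF m2(1)] by simp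
      moreover have "mt (K + M2a) ((K - {#Out a X#}) + M2')" unfolding mt_def ms.simps
        apply (rule exI[of _ a], rule exI[of _ X], rule exI[of _ y'], rule exI[of _ R']) using 3 i' by (auto simp: multiset_eq_iff count_greater_zero_iff[symmetric] simp del: count_greater_zero_iff)
      ultimately have "mt\<^sup>*\<^sup>* (comps Q) ((K - {#Out a X#}) + M2')" by auto
      then obtain Q' where "tau_star Q Q'" "comps Q' = (K - {#Out a X#}) + M2'" using mt_tau_star by blast
      moreover have "comps P' = (K - {#Out a X#}) + M1'" using h 3 unfolding M1'_def by (auto simp: multiset_eq_iff count_greater_zero_iff[symmetric] simp del: count_greater_zero_iff)
      ultimately show ?thesis using ctxm_diff[OF PQ(3)] m2(3) unfolding liftrel_def by blast
    next
      case 4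
      have "a \<in> H" using inv 4 unfolding sysinv_def by auto
      moreover have "a \<notin> H" using PQ(3) 4 unfolding ctxm_def by auto
      ultimately show ?thesis by blast
    qed
  }
qed

lemma sysbisim_equiv:
  assumes "sysbisim H S" "S (comps P) (comps Q)"
  shows "barbed_equiv H P Q"
  unfolding barbed_equiv_def
  apply (rule exI[of _ "liftrel H S"])
  using liftrel_bisim[OF assms(1)] assms(2) unfolding liftrel_def ctxm_def
  by (metis add_0 set_mset_empty empty_iff)


lemma beq_bisim: "barbed_bisim H (barbed_equiv H)"
  unfolding barbed_bisim_def
proof (intro conjI allI impI)
  show "symp (barbed_equiv H)"
  proof (rule sympI)
    fix P Q assume "barbed_equiv H P Q"
    then obtain R where R: "barbed_bisim H R" "R P Q" unfolding barbed_equiv_def by blast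
    then have "symp R" unfolding barbed_bisim_def by blast
    with R have "R Q P" by (meson sympD)
    with R show "barbed_equiv H Q P" unfolding barbed_equiv_def by blast
  qed
next
  fix P Q assume "barbed_equiv H P Q"
  then obtain R where R: "barbed_bisim H R" "R P Q" unfolding barbed_equiv_def by blast
  then have h: "(\<forall>\<mu>. has_barb H P \<mu> \<longrightarrow> weak_barb H Q \<mu>) \<and>
      (\<forall>R'. fn R' \<inter> H = {} \<and> fv R' = {} \<longrightarrow> R (Par P R') (Par Q R')) \<and>
      (\<forall>P'. ptrans P LTau P' \<longrightarrow> (\<exists>Q'. tau_star Q Q' \<and> R P' Q'))"
    unfolding barbed_bisim_def by blast
  {
    fix \<mu> assume "has_barb H P \<mu>" then show "weak_barb H Q \<mu>" using h by blast
  }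
  {
    fix R' assume "fn R' \<inter> H = {} \<and> fv R' = {}"
    then show "barbed_equiv H (Par P R') (Par Q R')" using h R(1) unfolding barbed_equiv_def by blast
  }
  {
    fix P' assume "ptrans P LTau P'"
    then show "\<exists>Q'. tau_star Q Q' \<and> barbed_equiv H P' Q'" using h R(1) unfolding barbed_equiv_def by blast
  }
qed

lemma beq_sym: "barbed_equiv H P Q \<Longrightarrow> barbed_equiv H Q P"
proof -
  assume a: "barbed_equiv H P Q"
  have "symp (barbed_equiv H)" using beq_bisim unfolding barbed_bisim_def by blast
  with a show ?thesis by (meson sympD)
qed

lemma beq_barb: "barbed_equiv H P Q \<Longrightarrow> has_barb H P \<mu> \<Longrightarrow> weak_barb H Q \<mu>"
  using beq_bisim unfolding barbed_bisim_def by blast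

lemma beq_par: "barbed_equiv H P Q \<Longrightarrow> fn R \<inter> H = {} \<Longrightarrow> fv R = {} \<Longrightarrow> barbed_equiv H (Par P R) (Par Q R)"
  using beq_bisim unfolding barbed_bisim_def by blast

lemma beq_tau: "barbed_equiv H P Q \<Longrightarrow> ptrans P LTau P' \<Longrightarrow> \<exists>Q'. tau_star Q Q' \<and> barbed_equiv H P' Q'"
  using beq_bisim unfolding barbed_bisim_def by blast

lemma tau_star_trans: "tau_star P Q \<Longrightarrow> tau_star Q R \<Longrightarrow> tau_star P R"
  unfolding tau_star_def by auto

lemma beq_tau_star: "tau_star P P' \<Longrightarrow> barbed_equiv H P Q \<Longrightarrow> \<exists>Q'. tau_star Q Q' \<and> barbed_equiv H P' Q'"
  unfolding tau_star_def
proof (induction arbitrary: rule: rtranclp_induct)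
  case base then show ?case by auto
next
  case (step y z)
  then obtain Q1 where "(\<lambda>P Q. ptrans P LTau Q)\<^sup>*\<^sup>* Q Q1" "barbed_equiv H y Q1" by blast
  with beq_tau[OF this(2) step(2)] show ?case unfolding tau_star_def by (meson rtranclp_trans)
qed

lemma beq_wbarb: "barbed_equiv H P Q \<Longrightarrow> weak_barb H P \<mu> \<Longrightarrow> weak_barb H Q \<mu>"
proof -
  assume a: "barbed_equiv H P Q" "weak_barb H P \<mu>"
  then obtain P' where "tau_star P P'" "has_barb H P' \<mu>" unfolding weak_barb_def by blast
  with beq_tau_star[OF this(1) a(1)] obtain Q' where "tau_star Q Q'" "barbed_equiv H P' Q'" by blast
  with beq_barb[OF this(2) \<open>has_barb H P' \<mu>\<close>] show ?thesis unfolding weak_barb_def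
    using tau_star_trans by blast
qed

lemma beq_trans:
  assumes "barbed_equiv H P M" "barbed_equiv H M Q"
  shows "barbed_equiv H P Q"
proof -
  define R where "R = (\<lambda>P Q. \<exists>M. barbed_equiv H P M \<and> barbed_equiv H M Q)"
  have "barbed_bisim H R"
    unfolding barbed_bisim_def
  proof (intro conjI allI impI)
    show "symp R" unfolding R_def symp_def using beq_sym by blast
  next
    fix P Q assume "R P Q"
    then obtain M where M: "barbed_equiv H P M" "barbed_equiv H M Q" unfolding R_def by blast
    {
      fix \<mu> assume "has_barb H P \<mu>"
      then have "weak_barb H M \<mu>" using beq_barb M(1) by blast
      then show "weak_barb H Q \<mu>" using beq_wbarb M(2) by blast
    }
    {
      fix R' assume "fn R' \<inter> H = {} \<and> fv R' = {}"
      then show "R (Par P R') (Par Q R')" using M beq_par unfolding R_def by blast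
    }
    {
      fix P' assume "ptrans P LTau P'"
      then obtain M' where "tau_star M M'" "barbed_equiv H P' M'" using beq_tau M(1) by blast
      then obtain Q' where "tau_star Q Q'" "barbed_equiv H M' Q'" using beq_tau_star M(2) by blast
      then show "\<exists>Q'. tau_star Q Q' \<and> R P' Q'" using \<open>barbed_equiv H P' M'\<close> unfolding R_def by blast
    }
  qed
  then show ?thesis using assms unfolding barbed_equiv_def R_def by blast
qed


definition wstep :: "conf \<Rightarrow> flag \<Rightarrow> conf \<Rightarrow> bool" where
  "wstep C F C' = (\<exists>D. mtau\<^sup>*\<^sup>* C D \<and> mstep D F C')"

definition wterm :: "conf \<Rightarrow> flag \<Rightarrow> bool" where
  "wterm C F = (\<exists>D. mtau\<^sup>*\<^sup>* C D \<and> mterm D F)"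

lemma mtau_det: "mtau C C1 \<Longrightarrow> mtau C C2 \<Longrightarrow> C1 = C2"
  by (auto elim!: mtau.cases)

lemma mstep_notau: "mstep C F C' \<Longrightarrow> \<not> mtau C D"
  by (auto elim!: mstep.cases mtau.cases)

lemma mterm_notau: "mterm C F \<Longrightarrow> \<not> mtau C D"
  by (auto elim!: mterm.cases mtau.cases)

lemma final_star: "mtau\<^sup>*\<^sup>* C C' \<Longrightarrow> (\<And>D. \<not> mtau C D) \<Longrightarrow> C' = C"
  by (induction rule: converse_rtranclp_induct) auto

lemma det_star: "mtau\<^sup>*\<^sup>* C D1 \<Longrightarrow> mtau\<^sup>*\<^sup>* C D2 \<Longrightarrow> mtau\<^sup>*\<^sup>* D1 D2 \<or> mtau\<^sup>*\<^sup>* D2 D1"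
proof (induction arbitrary: D2 rule: converse_rtranclp_induct)
  case base then show ?case by auto
next
  case (step C C1)
  from step.prems show ?case
  proof (cases rule: converse_rtranclpE)
    case base then show ?thesis using step.hyps by (meson converse_rtranclp_into_rtranclp)
  next
    case (step C2)
    with \<open>mtau C C1\<close> have "C2 = C1" using mtau_det by blast
    with step show ?thesis using \<open>\<And>D2. mtau\<^sup>*\<^sup>* C1 D2 \<Longrightarrow> _\<close> by blast
  qed
qed

lemma star_to_final: "mtau\<^sup>*\<^sup>* C D \<Longrightarrow> mtau\<^sup>*\<^sup>* C D' \<Longrightarrow> (\<And>X. \<not> mtau D X) \<Longrightarrow> mtau\<^sup>*\<^sup>* D' D"
  using det_star final_star by metis

lemma mb_unfold:
  assumes "mach_bisimilar C1 C2"
  shows "symp (\<lambda>A B. mach_bisimilar A B)"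
    and "wstep C1 F C1' \<Longrightarrow> \<exists>C2'. wstep C2 F C2' \<and> mach_bisimilar C1' C2'"
    and "wterm C1 F \<Longrightarrow> wterm C2 F"
proof -
  show "symp (\<lambda>A B. mach_bisimilar A B)"
  proof (rule sympI)
    fix A B assume "mach_bisimilar A B"
    then obtain R where R: "mach_bisim R" "R A B" unfolding mach_bisimilar_def by blast
    then have "symp R" unfolding mach_bisim_def by blast
    with R have "R B A" by (meson sympD)
    with R show "mach_bisimilar B A" unfolding mach_bisimilar_def by blast
  qed
  obtain R where R: "mach_bisim R" "R C1 C2" using assms unfolding mach_bisimilar_def by blast
  then have h: "\<forall>F. (\<forall>C1'. (\<exists>D. mtau\<^sup>*\<^sup>* C1 D \<and> mstep D F C1') \<longrightarrow>
          (\<exists>C2'. (\<exists>D. mtau\<^sup>*\<^sup>* C2 D \<and> mstep D F C2') \<and> R C1' C2')) \<and>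
      ((\<exists>D. mtau\<^sup>*\<^sup>* C1 D \<and> mterm D F) \<longrightarrow> (\<exists>D. mtau\<^sup>*\<^sup>* C2 D \<and> mterm D F))"
    unfolding mach_bisim_def by blast
  show "wstep C1 F C1' \<Longrightarrow> \<exists>C2'. wstep C2 F C2' \<and> mach_bisimilar C1' C2'"
    using h R(1) unfolding wstep_def mach_bisimilar_def by blast
  show "wterm C1 F \<Longrightarrow> wterm C2 F"
    using h unfolding wterm_def by blast
qed

lemma mb_sym: "mach_bisimilar A B \<Longrightarrow> mach_bisimilar B A"
  using mb_unfold(1) by (meson sympD)

lemma mb_intro:
  assumes "symp R" "\<And>C1 C2 F C1'. R C1 C2 \<Longrightarrow> wstep C1 F C1' \<Longrightarrow> \<exists>C2'. wstep C2 F C2' \<and> R C1' C2'"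
    "\<And>C1 C2 F. R C1 C2 \<Longrightarrow> wterm C1 F \<Longrightarrow> wterm C2 F" "R A B"
  shows "mach_bisimilar A B"
proof -
  have "mach_bisim R" unfolding mach_bisim_def
    using assms(1,2,3) unfolding wstep_def wterm_def by blast
  then show ?thesis using assms(4) unfolding mach_bisimilar_def by blast
qed

lemma mb_trans: "mach_bisimilar A B \<Longrightarrow> mach_bisimilar B C \<Longrightarrow> mach_bisimilar A C"
proof -
  assume a: "mach_bisimilar A B" "mach_bisimilar B C"
  show ?thesis
  proof (rule mb_intro[where R="\<lambda>X Z. \<exists>Y. mach_bisimilar X Y \<and> mach_bisimilar Y Z"])
    show "symp (\<lambda>X Z. \<exists>Y. mach_bisimilar X Y \<and> mach_bisimilar Y Z)"
      unfolding symp_def using mb_sym by blast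
  next
    fix C1 C2 F C1' assume "\<exists>Y. mach_bisimilar C1 Y \<and> mach_bisimilar Y C2" "wstep C1 F C1'"
    then show "\<exists>C2'. wstep C2 F C2' \<and> (\<exists>Y. mach_bisimilar C1' Y \<and> mach_bisimilar Y C2')"
      using mb_unfold(2) by metis
  next
    fix C1 C2 F assume "\<exists>Y. mach_bisimilar C1 Y \<and> mach_bisimilar Y C2" "wterm C1 F"
    then show "wterm C2 F" using mb_unfold(3) by metis
  qed (use a in blast)
qed

lemma mb_star: "mtau\<^sup>*\<^sup>* C C' \<Longrightarrow> mach_bisimilar C C'"
proof (rule mb_intro[where R="\<lambda>X Y. mtau\<^sup>*\<^sup>* X Y \<or> mtau\<^sup>*\<^sup>* Y X"])
  show "symp (\<lambda>X Y. mtau\<^sup>*\<^sup>* X Y \<or> mtau\<^sup>*\<^sup>* Y X)" unfolding symp_def by blast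
next
  fix C1 C2 F C1' assume h: "mtau\<^sup>*\<^sup>* C1 C2 \<or> mtau\<^sup>*\<^sup>* C2 C1" "wstep C1 F C1'"
  then obtain D where D: "mtau\<^sup>*\<^sup>* C1 D" "mstep D F C1'" unfolding wstep_def by blast
  have "mtau\<^sup>*\<^sup>* C2 D"
    using h(1)
  proof
    assume "mtau\<^sup>*\<^sup>* C1 C2"
    then show ?thesis using star_to_final[OF D(1)] mstep_notau[OF D(2)] by blast
  next
    assume "mtau\<^sup>*\<^sup>* C2 C1" then show ?thesis using D(1) by auto
  qed
  then show "\<exists>C2'. wstep C2 F C2' \<and> (mtau\<^sup>*\<^sup>* C1' C2' \<or> mtau\<^sup>*\<^sup>* C2' C1')"
    using D(2) unfolding wstep_def by blast
next
  fix C1 C2 F assume h: "mtau\<^sup>*\<^sup>* C1 C2 \<or> mtau\<^sup>*\<^sup>* C2 C1" "wterm C1 F"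
  then obtain D where D: "mtau\<^sup>*\<^sup>* C1 D" "mterm D F" unfolding wterm_def by blast
  have "mtau\<^sup>*\<^sup>* C2 D"
    using h(1)
  proof
    assume "mtau\<^sup>*\<^sup>* C1 C2"
    then show ?thesis using star_to_final[OF D(1)] mterm_notau[OF D(2)] by blast
  next
    assume "mtau\<^sup>*\<^sup>* C2 C1" then show ?thesis using D(1) by auto
  qed
  then show "wterm C2 F" using D(2) unfolding wterm_def by blast
qed blast

lemma mb_refl: "mach_bisimilar C C"
  using mb_star by blast

lemma ev_fv_final: "mtau\<^sup>*\<^sup>* (Ev (FV g) \<pi> n) D \<Longrightarrow> D = Ev (FV g) \<pi> n"
  by (rule final_star) (auto elim: mtau.cases)

lemma co_final: "mtau\<^sup>*\<^sup>* (Co \<pi> n) D \<Longrightarrow> D = Co \<pi> n"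
  by (rule final_star) (auto elim: mtau.cases)

lemma mb_fv:
  assumes "mach_bisimilar (Co \<pi>1 n1) (Co \<pi>2 n2)"
  shows "mach_bisimilar (Ev (FV g) \<pi>1 n1) (Ev (FV g) \<pi>2 n2)"
proof (rule mb_intro[where R="\<lambda>X Y. (\<exists>g \<pi>1 n1 \<pi>2 n2. X = Ev (FV g) \<pi>1 n1 \<and> Y = Ev (FV g) \<pi>2 n2 \<and>
      mach_bisimilar (Co \<pi>1 n1) (Co \<pi>2 n2)) \<or> mach_bisimilar X Y"])
  show "symp (\<lambda>X Y. (\<exists>g \<pi>1 n1 \<pi>2 n2. X = Ev (FV g) \<pi>1 n1 \<and> Y = Ev (FV g) \<pi>2 n2 \<and>
      mach_bisimilar (Co \<pi>1 n1) (Co \<pi>2 n2)) \<or> mach_bisimilar X Y)" unfolding symp_def using mb_sym by blast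
next
  fix C1 C2 F C1'
  assume h: "(\<exists>g \<pi>1 n1 \<pi>2 n2. C1 = Ev (FV g) \<pi>1 n1 \<and> C2 = Ev (FV g) \<pi>2 n2 \<and> mach_bisimilar (Co \<pi>1 n1) (Co \<pi>2 n2))
     \<or> mach_bisimilar C1 C2"
    "wstep C1 F C1'"
  show "\<exists>C2'. wstep C2 F C2' \<and> ((\<exists>g \<pi>1 n1 \<pi>2 n2. C1' = Ev (FV g) \<pi>1 n1 \<and> C2' = Ev (FV g) \<pi>2 n2 \<and>
      mach_bisimilar (Co \<pi>1 n1) (Co \<pi>2 n2)) \<or> mach_bisimilar C1' C2')"
    using h(1)
  proof
    assume "\<exists>g \<pi>1 n1 \<pi>2 n2. C1 = Ev (FV g) \<pi>1 n1 \<and> C2 = Ev (FV g) \<pi>2 n2 \<and> mach_bisimilar (Co \<pi>1 n1) (Co \<pi>2 n2)"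
    then obtain g \<pi>1 n1 \<pi>2 n2 where e: "C1 = Ev (FV g) \<pi>1 n1" "C2 = Ev (FV g) \<pi>2 n2" "mach_bisimilar (Co \<pi>1 n1) (Co \<pi>2 n2)"
      by blast
    from h(2) e(1) have "mstep (Ev (FV g) \<pi>1 n1) F C1'" unfolding wstep_def using ev_fv_final by blast
    then have "F = FFree g" "C1' = Co \<pi>1 n1" by (auto elim: mstep.cases)
    moreover have "wstep C2 (FFree g) (Co \<pi>2 n2)" unfolding wstep_def e(2) by (blast intro: mstep.intros)
    ultimately show ?thesis using e by blast
  next
    assume "mach_bisimilar C1 C2"
    then show ?thesis using mb_unfold(2) h(2) by blast
  qed
next
  fix C1 C2 F assume h: "(\<exists>g \<pi>1 n1 \<pi>2 n2. C1 = Ev (FV g) \<pi>1 n1 \<and> C2 = Ev (FV g) \<pi>2 n2 \<and> mach_bisimilar (Co \<pi>1 n1) (Co \<pi>2 n2))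
     \<or> mach_bisimilar C1 C2"
    "wterm C1 F"
  then show "wterm C2 F" unfolding wterm_def using ev_fv_final mb_unfold(3)[unfolded wterm_def] by (blast elim: mterm.cases)
qed (use assms in blast)

lemma bvs_tsubst: "bvs_free (tsubst t x s) \<subseteq> (bvs_free t - {x}) \<union> bvs_free s"
  by (induction t) auto

lemma bvs_tsubst_closed: "bvs_free t \<subseteq> {x} \<Longrightarrow> bvs_free s = {} \<Longrightarrow> bvs_free (tsubst t x s) = {}"
  using bvs_tsubst[of t x s] by auto

lemma wf_mtau: "wf_conf C \<Longrightarrow> mtau C C' \<Longrightarrow> wf_conf C'"
  by (auto elim!: mtau.cases simp: wf_conf_def wf_term_def bvs_tsubst_closed)

lemma wf_mtau_star: "mtau\<^sup>*\<^sup>* C C' \<Longrightarrow> wf_conf C \<Longrightarrow> wf_conf C'"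
  by (induction rule: rtranclp_induct) (auto intro: wf_mtau)

lemma wf_mstep: "wf_conf C \<Longrightarrow> mstep C F C' \<Longrightarrow> wf_conf C'"
  by (auto elim!: mstep.cases simp: wf_conf_def wf_term_def bvs_tsubst_closed)


lemma fv_num[simp]: "fv (num n) = {}"
  by (induction n) auto

lemma comps_num[simp]: "comps (num n) = {#num n#}"
  by (cases n) auto

lemma comps_trm[simp]: "comps (trm t) = {#trm t#}"
  by (cases t) auto

lemma num_neq_Out[simp]: "num n \<noteq> Out a X" "Out a X \<noteq> num n"
  by (cases n; simp)+

lemma num_eq_Inp[simp]: "(Inp a y Q = num f) \<longleftrightarrow> (y = VU \<and> ((f = 0 \<and> a = NZ \<and> Q = Out NInit Nil) \<or> (\<exists>g. f = Suc g \<and> a = NSuc \<and> Q = num g)))"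
  by (cases f) auto

definition RestartB :: proc where
  "RestartB = Inp NK VX (Par (Out NHd (Var VX)) (Par (Out NK (Inp NSuc VU (Var VX)))
        (Par (Out NC stk_nil) (Out NB Nil))))"

definition DoneP :: proc where "DoneP = Inp NDone VU Nil"
definition IHC :: proc where "IHC = Inp NHd VX (Inp NB VU (Choice (Var VX)))"
definition RecB :: proc where "RecB = Inp NRec VX (Par (Var VX) (Par (Out NRec (Var VX)) ContP))"
definition EP :: "lterm \<Rightarrow> proc" where "EP t = Inp NEnter VU (Inp NC VU (Par (trm t) (Out NC stk_nil)))"
definition SP :: proc where "SP = Inp NSkip VU (Out NInit Nil)"
definition ChB :: proc where "ChB = Inp NCh VY (Inp NCh VU (Var VY))"
definition IHL :: "nat \<Rightarrow> lterm \<Rightarrow> proc" where "IHL x t = Inp NHd (LV x) (Inp NB VU (trm t))"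

lemma Restart_eq: "Restart = Inp NLam VU RestartB" unfolding Restart_def RestartB_def ..
lemma RecP_eq: "RecP = Inp NInit VU RecB" unfolding RecP_def RecB_def ..
lemma ContP_eq: "ContP = Inp NC VP (Par (Var VP) (Par (Out NB DoneP) IHC))" unfolding ContP_def DoneP_def IHC_def ..
lemma trm_lam: "trm (Lam x t) = Inp NC VP (Par (Var VP) (Par (Out NB Restart) (IHL x t)))" by (simp add: IHL_def)
lemma Choice_eq: "Choice P = Par (Out NCh (Inp NEnter VU (Inp NC VU (Par P (Out NC stk_nil))))) (Par (Out NCh SP) ChB)"
  unfolding Choice_def plus_def SP_def ChB_def ..

lemma fv_consts[simp]: "fv stk_nil = {}" "fv RestartB = {}" "fv Restart = {}" "fv DoneP = {}" "fv IHC = {}"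
  "fv ContP = {}" "fv RecB = {}" "fv RecP = {}" "fv SP = {}" "fv ChB = {}"
  by (auto simp: stk_nil_def RestartB_def Restart_def DoneP_def IHC_def ContP_def RecB_def RecP_def SP_def ChB_def
      Choice_def plus_def)

lemma fv_trm: "fv (trm t) = LV ` bvs_free t"
  by (induction t) (auto simp: Restart_eq)

lemma fv_trm_closed[simp]: "wf_term t \<Longrightarrow> fv (trm t) = {}"
  by (simp add: fv_trm wf_term_def)

lemma psubst_closed[simp]: "fv Q = {} \<Longrightarrow> psubst Q x P = Q"
  by (simp add: psubst_nofv)

lemma psubst_trm: "psubst (trm t) (LV x) P = trm (tsubst t x s)" if "P = trm s"
  using that by (induction t) (auto simp: Restart_eq)

lemma psubst_trm_num: "psubst (trm t) (LV x) (num n) = trm (tsubst t x (FV n))"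
  using psubst_trm[of "num n" "FV n"] by simp

definition Kst :: "nat \<Rightarrow> proc multiset" where
  "Kst n = {#Out NK (num n), RecP, Out NRec RecP#}"

lemma psubst_trm_nonLV[simp]: "y \<notin> range LV \<Longrightarrow> psubst (trm t) y P = trm t"
  by (induction t) (auto simp: Restart_eq)

lemma psubst_trm_VP[simp]: "psubst (trm t) VP P = trm t" "psubst (trm t) VU P = trm t" "psubst (trm t) VX P = trm t"
  "psubst (trm t) VY P = trm t"
  by (auto intro: psubst_trm_nonLV)

definition KE1 :: "lterm \<Rightarrow> lterm list \<Rightarrow> nat \<Rightarrow> proc multiset" where
  "KE1 t \<pi> n = {#Out NCh SP, Inp NCh VU (EP t), Out NC (stk \<pi>)#} + Kst n"
definition KE2 :: "lterm \<Rightarrow> lterm list \<Rightarrow> nat \<Rightarrow> proc multiset" where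
  "KE2 t \<pi> n = {#EP t, Out NC (stk \<pi>)#} + Kst n"
definition KS1 :: "lterm \<Rightarrow> lterm list \<Rightarrow> nat \<Rightarrow> proc multiset" where
  "KS1 t \<pi> n = {#Out NCh (EP t), Inp NCh VU SP, Out NC (stk \<pi>)#} + Kst n"
definition KS2 :: "lterm list \<Rightarrow> nat \<Rightarrow> proc multiset" where
  "KS2 \<pi> n = {#SP, Out NC (stk \<pi>)#} + Kst n"
definition Dead :: "nat \<Rightarrow> proc multiset" where
  "Dead n = {#IHC#} + Kst n"

lemmas U = Kst_def RecP_eq Restart_eq ContP_eq IHL_def DoneP_def IHC_def RecB_def EP_def SP_def ChB_def
  stk_nil_def RestartB_def Choice_eq

lemma t_app: "mt ({#trm (App t s), Out NC (stk \<pi>)#} + Kst n) M' \<Longrightarrow> M' = {#trm t, Out NC (stk (s # \<pi>))#} + Kst n"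
  by (auto simp: mt_def ms.simps U)

lemma t_lam0c: "mt ({#trm (Lam x t), Out NC (stk (s # \<pi>))#} + Kst n) M' \<Longrightarrow>
   M' = {#Out NHd (trm s), Out NC (stk \<pi>), Out NB Restart, IHL x t#} + Kst n"
  by (auto simp: mt_def ms.simps U)

lemma t_lam0n: "mt ({#trm (Lam x t), Out NC (stk [])#} + Kst n) M' \<Longrightarrow>
   M' = {#stk_nil, Out NB Restart, IHL x t#} + Kst n"
  by (auto simp: mt_def ms.simps U)

lemma t_lamc1: "mt ({#Out NHd (trm s), Out NC (stk \<pi>), Out NB Restart, IHL x t#} + Kst n) M' \<Longrightarrow>
   M' = {#Out NC (stk \<pi>), Out NB Restart, Inp NB VU (trm (tsubst t x s))#} + Kst n"
  by (auto simp: mt_def ms.simps U psubst_trm)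

lemma t_lamc2: "mt ({#Out NC (stk \<pi>), Out NB Restart, Inp NB VU (trm (tsubst t x s))#} + Kst n) M' \<Longrightarrow>
   M' = {#trm (tsubst t x s), Out NC (stk \<pi>)#} + Kst n"
  by (auto simp: mt_def ms.simps U)

lemma t_lamn1: "mt ({#stk_nil, Out NB Restart, IHL x t#} + Kst n) M' \<Longrightarrow> M' = {#Restart, IHL x t#} + Kst n"
  by (auto simp: mt_def ms.simps U )

lemma t_lamn2: "mt ({#Restart, IHL x t#} + Kst n) M' \<Longrightarrow> False"
  by (auto simp: mt_def ms.simps U)

lemma t_r1: "mt ({#RestartB, IHL x t#} + Kst n) M' \<Longrightarrow> M' = {#Out NHd (num n), Out NC stk_nil, Out NB Nil, IHL x t#} + Kst (Suc n)"
  by (auto simp: mt_def ms.simps U )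

lemma t_r2: "mt ({#Out NHd (num n), Out NC stk_nil, Out NB Nil, IHL x t#} + Kst (Suc n)) M' \<Longrightarrow> M' = {#Out NC stk_nil, Out NB Nil, Inp NB VU (trm (tsubst t x (FV n)))#} + Kst (Suc n)"
  by (auto simp: mt_def ms.simps U psubst_trm_num)

lemma t_r3: "mt ({#Out NC stk_nil, Out NB Nil, Inp NB VU (trm (tsubst t x (FV n)))#} + Kst (Suc n)) M' \<Longrightarrow> M' = {#trm (tsubst t x (FV n)), Out NC (stk [])#} + Kst (Suc n)"
  by (auto simp: mt_def ms.simps U )

lemma t_fv: "mt ({#num f, Out NC (stk \<pi>)#} + Kst n) M' \<Longrightarrow> False"
  by (auto simp: mt_def ms.simps U)

lemma t_en: "mt ({#Inp NC VU (Par (trm t) (Out NC stk_nil)), Out NC (stk \<pi>)#} + Kst n) M' \<Longrightarrow> M' = {#trm t, Out NC (stk [])#} + Kst n"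
  by (auto simp: mt_def ms.simps U )

lemma t_c1: "mt ({#Out NInit Nil, Out NC (stk \<pi>)#} + Kst n) M' \<Longrightarrow> M' = {#RecB, Out NRec RecP, Out NC (stk \<pi>), Out NK (num n)#}"
  by (auto simp: mt_def ms.simps U )

lemma t_c2: "mt ({#RecB, Out NRec RecP, Out NC (stk \<pi>), Out NK (num n)#}) M' \<Longrightarrow> M' = {#Out NC (stk \<pi>), ContP#} + Kst n"
  by (auto simp: mt_def ms.simps U )

lemma t_c3n: "mt ({#Out NC (stk []), ContP#} + Kst n) M' \<Longrightarrow> M' = {#stk_nil, Out NB DoneP, IHC#} + Kst n"
  by (auto simp: mt_def ms.simps U )

lemma t_c3c: "mt ({#Out NC (stk (t # \<pi>)), ContP#} + Kst n) M' \<Longrightarrow> M' = {#Out NHd (trm t), Out NC (stk \<pi>), Out NB DoneP, IHC#} + Kst n"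
  by (auto simp: mt_def ms.simps U )

lemma t_c4n: "mt ({#stk_nil, Out NB DoneP, IHC#} + Kst n) M' \<Longrightarrow> M' = {#DoneP, IHC#} + Kst n"
  by (auto simp: mt_def ms.simps U )

lemma t_c5n: "mt ({#DoneP, IHC#} + Kst n) M' \<Longrightarrow> False"
  by (auto simp: mt_def ms.simps U)

lemma t_c4: "mt ({#Out NHd (trm t), Out NC (stk \<pi>), Out NB DoneP, IHC#} + Kst n) M' \<Longrightarrow> M' = {#Out NC (stk \<pi>), Out NB DoneP, Inp NB VU (Choice (trm t))#} + Kst n"
  by (auto simp: mt_def ms.simps U )

lemma t_c5: "mt ({#Out NC (stk \<pi>), Out NB DoneP, Inp NB VU (Choice (trm t))#} + Kst n) M' \<Longrightarrow> M' = {#Out NCh (EP t), Out NCh SP, ChB, Out NC (stk \<pi>)#} + Kst n"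
  by (auto simp: mt_def ms.simps U )

lemma t_c6: "mt ({#Out NCh (EP t), Out NCh SP, ChB, Out NC (stk \<pi>)#} + Kst n) M' \<Longrightarrow> M' = KE1 t \<pi> n \<or> M' = KS1 t \<pi> n"
  by (auto simp: mt_def ms.simps U KE1_def KS1_def)

lemma t_ke1: "mt (KE1 t \<pi> n) M' \<Longrightarrow> M' = KE2 t \<pi> n"
  by (auto simp: mt_def ms.simps U KE1_def KE2_def)

lemma t_ke2: "mt (KE2 t \<pi> n) M' \<Longrightarrow> False"
  by (auto simp: mt_def ms.simps U KE2_def)

lemma t_ks1: "mt (KS1 t \<pi> n) M' \<Longrightarrow> M' = KS2 \<pi> n"
  by (auto simp: mt_def ms.simps U KS1_def KS2_def)

lemma t_ks2: "mt (KS2 \<pi> n) M' \<Longrightarrow> False"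
  by (auto simp: mt_def ms.simps U KS2_def)
lemma t_dead: "mt (Dead n) M' \<Longrightarrow> False"
  by (auto simp: mt_def ms.simps U Dead_def)

lemma i_app: "ms ({#trm (App t s), Out NC (stk \<pi>)#} + Kst n) (LIn a Z) M' \<Longrightarrow> a \<notin> Hidden \<Longrightarrow> False"
  by (auto simp: ms.simps U Hidden_def )

lemma i_lam0: "ms ({#trm (Lam x t), Out NC (stk \<pi>)#} + Kst n) (LIn a Z) M' \<Longrightarrow> a \<notin> Hidden \<Longrightarrow> False"
  by (auto simp: ms.simps U Hidden_def )

lemma i_lamc1: "ms ({#Out NHd (trm s), Out NC (stk \<pi>), Out NB Restart, IHL x t#} + Kst n) (LIn a Z) M' \<Longrightarrow> a \<notin> Hidden \<Longrightarrow> False"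
  by (auto simp: ms.simps U Hidden_def )

lemma i_lamc2: "ms ({#Out NC (stk \<pi>), Out NB Restart, Inp NB VU (trm (tsubst t x s))#} + Kst n) (LIn a Z) M' \<Longrightarrow> a \<notin> Hidden \<Longrightarrow> False"
  by (auto simp: ms.simps U Hidden_def )

lemma i_lamn1: "ms ({#stk_nil, Out NB Restart, IHL x t#} + Kst n) (LIn a Z) M' \<Longrightarrow> a \<notin> Hidden \<Longrightarrow> False"
  by (auto simp: ms.simps U Hidden_def )

lemma i_lamn2: "ms ({#Restart, IHL x t#} + Kst n) (LIn a Z) M' \<Longrightarrow> a \<notin> Hidden \<Longrightarrow> a = NLam \<and> M' = {#RestartB, IHL x t#} + Kst n"
  by (auto simp: ms.simps U Hidden_def )

lemma i_r1: "ms ({#RestartB, IHL x t#} + Kst n) (LIn a Z) M' \<Longrightarrow> a \<notin> Hidden \<Longrightarrow> False"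
  by (auto simp: ms.simps U Hidden_def )

lemma i_r2: "ms ({#Out NHd (num n), Out NC stk_nil, Out NB Nil, IHL x t#} + Kst (Suc n)) (LIn a Z) M' \<Longrightarrow> a \<notin> Hidden \<Longrightarrow> False"
  by (auto simp: ms.simps U Hidden_def )

lemma i_r3: "ms ({#Out NC stk_nil, Out NB Nil, Inp NB VU (trm (tsubst t x (FV n)))#} + Kst (Suc n)) (LIn a Z) M' \<Longrightarrow> a \<notin> Hidden \<Longrightarrow> False"
  by (auto simp: ms.simps U Hidden_def )

lemma i_fv: "ms ({#num f, Out NC (stk \<pi>)#} + Kst n) (LIn a Z) M' \<Longrightarrow> a \<notin> Hidden \<Longrightarrow> (f = 0 \<and> a = NZ \<and> M' = {#Out NInit Nil, Out NC (stk \<pi>)#} + Kst n) \<or> (\<exists>g. f = Suc g \<and> a = NSuc \<and> M' = {#num g, Out NC (stk \<pi>)#} + Kst n)"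
  by (auto simp: ms.simps U Hidden_def )

lemma i_en: "ms ({#Inp NC VU (Par (trm t) (Out NC stk_nil)), Out NC (stk \<pi>)#} + Kst n) (LIn a Z) M' \<Longrightarrow> a \<notin> Hidden \<Longrightarrow> False"
  by (auto simp: ms.simps U Hidden_def )

lemma i_c1: "ms ({#Out NInit Nil, Out NC (stk \<pi>)#} + Kst n) (LIn a Z) M' \<Longrightarrow> a \<notin> Hidden \<Longrightarrow> False"
  by (auto simp: ms.simps U Hidden_def )

lemma i_c2: "ms ({#RecB, Out NRec RecP, Out NC (stk \<pi>), Out NK (num n)#}) (LIn a Z) M' \<Longrightarrow> a \<notin> Hidden \<Longrightarrow> False"
  by (auto simp: ms.simps U Hidden_def )

lemma i_c3: "ms ({#Out NC (stk \<pi>), ContP#} + Kst n) (LIn a Z) M' \<Longrightarrow> a \<notin> Hidden \<Longrightarrow> False"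
  by (auto simp: ms.simps U Hidden_def )

lemma i_c4n: "ms ({#stk_nil, Out NB DoneP, IHC#} + Kst n) (LIn a Z) M' \<Longrightarrow> a \<notin> Hidden \<Longrightarrow> False"
  by (auto simp: ms.simps U Hidden_def )

lemma i_c5n: "ms ({#DoneP, IHC#} + Kst n) (LIn a Z) M' \<Longrightarrow> a \<notin> Hidden \<Longrightarrow> a = NDone \<and> M' = Dead n"
  by (auto simp: ms.simps U Hidden_def Dead_def)

lemma i_c4: "ms ({#Out NHd (trm t), Out NC (stk \<pi>), Out NB DoneP, IHC#} + Kst n) (LIn a Z) M' \<Longrightarrow> a \<notin> Hidden \<Longrightarrow> False"
  by (auto simp: ms.simps U Hidden_def )

lemma i_c5: "ms ({#Out NC (stk \<pi>), Out NB DoneP, Inp NB VU (Choice (trm t))#} + Kst n) (LIn a Z) M' \<Longrightarrow> a \<notin> Hidden \<Longrightarrow> False"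
  by (auto simp: ms.simps U Hidden_def )

lemma i_c6: "ms ({#Out NCh (EP t), Out NCh SP, ChB, Out NC (stk \<pi>)#} + Kst n) (LIn a Z) M' \<Longrightarrow> a \<notin> Hidden \<Longrightarrow> False"
  by (auto simp: ms.simps U Hidden_def )

lemma i_ke1: "ms (KE1 t \<pi> n) (LIn a Z) M' \<Longrightarrow> a \<notin> Hidden \<Longrightarrow> False"
  by (auto simp: ms.simps U Hidden_def KE1_def)

lemma i_ke2: "ms (KE2 t \<pi> n) (LIn a Z) M' \<Longrightarrow> a \<notin> Hidden \<Longrightarrow> a = NEnter \<and> M' = {#Inp NC VU (Par (trm t) (Out NC stk_nil)), Out NC (stk \<pi>)#} + Kst n"
  by (auto simp: ms.simps U Hidden_def KE2_def)

lemma i_ks1: "ms (KS1 t \<pi> n) (LIn a Z) M' \<Longrightarrow> a \<notin> Hidden \<Longrightarrow> False"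
  by (auto simp: ms.simps U Hidden_def KS1_def)

lemma i_ks2: "ms (KS2 \<pi> n) (LIn a Z) M' \<Longrightarrow> a \<notin> Hidden \<Longrightarrow> a = NSkip \<and> M' = {#Out NInit Nil, Out NC (stk \<pi>)#} + Kst n"
  by (auto simp: ms.simps U Hidden_def KS2_def)

lemma i_dead: "ms (Dead n) (LIn a Z) M' \<Longrightarrow> a \<notin> Hidden \<Longrightarrow> False"
  by (auto simp: ms.simps U Hidden_def Dead_def)

fun iy :: "proc \<Rightarrow> pvar" where "iy (Inp a y Q) = y" | "iy _ = VU"
fun iQ :: "proc \<Rightarrow> proc" where "iQ (Inp a y Q) = Q" | "iQ _ = Nil"
fun oa :: "proc \<Rightarrow> name" where "oa (Out a X) = a" | "oa _ = NC"
fun oX :: "proc \<Rightarrow> proc" where "oX (Out a X) = X" | "oX _ = Nil"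

lemma mt_introOE: "Ob \<in># M \<Longrightarrow> E \<in># M \<Longrightarrow> Ob = Out (oa Ob) (oX Ob) \<Longrightarrow> E = Inp (oa Ob) (iy E) (iQ E) \<Longrightarrow>
   M' = M - {#Ob, E#} + comps (psubst (iQ E) (iy E) (oX Ob)) \<Longrightarrow> mt M M'"
  unfolding mt_def ms.simps by metis

lemma ms_inE: "E \<in># M \<Longrightarrow> E = Inp a (iy E) (iQ E) \<Longrightarrow> M' = M - {#E#} + comps (psubst (iQ E) (iy E) Z) \<Longrightarrow> ms M (LIn a Z) M'"
  unfolding ms.simps by metis

lemma e_app: "mt ({#trm (App t s), Out NC (stk \<pi>)#} + Kst n) ({#trm t, Out NC (stk (s # \<pi>))#} + Kst n)"
  by (rule mt_introOE[of "Out NC (stk \<pi>)" _ "trm (App t s)"]) (simp_all add: U )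

lemma e_lam0c: "mt ({#trm (Lam x t), Out NC (stk (s # \<pi>))#} + Kst n) ({#Out NHd (trm s), Out NC (stk \<pi>), Out NB Restart, IHL x t#} + Kst n)"
  by (rule mt_introOE[of "Out NC (stk (s # \<pi>))" _ "trm (Lam x t)"]) (simp_all add: U )

lemma e_lam0n: "mt ({#trm (Lam x t), Out NC (stk [])#} + Kst n) ({#stk_nil, Out NB Restart, IHL x t#} + Kst n)"
  by (rule mt_introOE[of "Out NC (stk [])" _ "trm (Lam x t)"]) (simp_all add: U )

lemma e_lamc1: "mt ({#Out NHd (trm s), Out NC (stk \<pi>), Out NB Restart, IHL x t#} + Kst n) ({#Out NC (stk \<pi>), Out NB Restart, Inp NB VU (trm (tsubst t x s))#} + Kst n)"
  by (rule mt_introOE[of "Out NHd (trm s)" _ "IHL x t"]) (simp_all add: U psubst_trm)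

lemma e_lamc2: "mt ({#Out NC (stk \<pi>), Out NB Restart, Inp NB VU (trm (tsubst t x s))#} + Kst n) ({#trm (tsubst t x s), Out NC (stk \<pi>)#} + Kst n)"
  by (rule mt_introOE[of "Out NB Restart" _ "Inp NB VU (trm (tsubst t x s))"]) (simp_all add: U )

lemma e_lamn1: "mt ({#stk_nil, Out NB Restart, IHL x t#} + Kst n) ({#Restart, IHL x t#} + Kst n)"
  by (rule mt_introOE[of "Out NB Restart" _ "stk_nil"]) (simp_all add: U )

lemma e_r1: "mt ({#RestartB, IHL x t#} + Kst n) ({#Out NHd (num n), Out NC stk_nil, Out NB Nil, IHL x t#} + Kst (Suc n))"
  by (rule mt_introOE[of "Out NK (num n)" _ "RestartB"]) (simp_all add: U )

lemma e_r2: "mt ({#Out NHd (num n), Out NC stk_nil, Out NB Nil, IHL x t#} + Kst (Suc n)) ({#Out NC stk_nil, Out NB Nil, Inp NB VU (trm (tsubst t x (FV n)))#} + Kst (Suc n))"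
  by (rule mt_introOE[of "Out NHd (num n)" _ "IHL x t"]) (simp_all add: U psubst_trm_num)

lemma e_r3: "mt ({#Out NC stk_nil, Out NB Nil, Inp NB VU (trm (tsubst t x (FV n)))#} + Kst (Suc n)) ({#trm (tsubst t x (FV n)), Out NC (stk [])#} + Kst (Suc n))"
  by (rule mt_introOE[of "Out NB Nil" _ "Inp NB VU (trm (tsubst t x (FV n)))"]) (simp_all add: U )

lemma e_en: "mt ({#Inp NC VU (Par (trm t) (Out NC stk_nil)), Out NC (stk \<pi>)#} + Kst n) ({#trm t, Out NC (stk [])#} + Kst n)"
  by (rule mt_introOE[of "Out NC (stk \<pi>)" _ "Inp NC VU (Par (trm t) (Out NC stk_nil))"]) (simp_all add: U )

lemma e_c1: "mt ({#Out NInit Nil, Out NC (stk \<pi>)#} + Kst n) ({#RecB, Out NRec RecP, Out NC (stk \<pi>), Out NK (num n)#})"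
  by (rule mt_introOE[of "Out NInit Nil" _ "RecP"]) (simp_all add: U )

lemma e_c2: "mt ({#RecB, Out NRec RecP, Out NC (stk \<pi>), Out NK (num n)#}) ({#Out NC (stk \<pi>), ContP#} + Kst n)"
  by (rule mt_introOE[of "Out NRec RecP" _ "RecB"]) (simp_all add: U )

lemma e_c3n: "mt ({#Out NC (stk []), ContP#} + Kst n) ({#stk_nil, Out NB DoneP, IHC#} + Kst n)"
  by (rule mt_introOE[of "Out NC (stk [])" _ "ContP"]) (simp_all add: U )

lemma e_c3c: "mt ({#Out NC (stk (t # \<pi>)), ContP#} + Kst n) ({#Out NHd (trm t), Out NC (stk \<pi>), Out NB DoneP, IHC#} + Kst n)"
  by (rule mt_introOE[of "Out NC (stk (t # \<pi>))" _ "ContP"]) (simp_all add: U )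

lemma e_c4n: "mt ({#stk_nil, Out NB DoneP, IHC#} + Kst n) ({#DoneP, IHC#} + Kst n)"
  by (rule mt_introOE[of "Out NB DoneP" _ "stk_nil"]) (simp_all add: U )

lemma e_c4: "mt ({#Out NHd (trm t), Out NC (stk \<pi>), Out NB DoneP, IHC#} + Kst n) ({#Out NC (stk \<pi>), Out NB DoneP, Inp NB VU (Choice (trm t))#} + Kst n)"
  by (rule mt_introOE[of "Out NHd (trm t)" _ "IHC"]) (simp_all add: U )

lemma e_c5: "mt ({#Out NC (stk \<pi>), Out NB DoneP, Inp NB VU (Choice (trm t))#} + Kst n) ({#Out NCh (EP t), Out NCh SP, ChB, Out NC (stk \<pi>)#} + Kst n)"
  by (rule mt_introOE[of "Out NB DoneP" _ "Inp NB VU (Choice (trm t))"]) (simp_all add: U )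

lemma e_c6e: "mt ({#Out NCh (EP t), Out NCh SP, ChB, Out NC (stk \<pi>)#} + Kst n) (KE1 t \<pi> n)"
  by (rule mt_introOE[of "Out NCh (EP t)" _ "ChB"]) (simp_all add: U KE1_def)

lemma e_c6s: "mt ({#Out NCh (EP t), Out NCh SP, ChB, Out NC (stk \<pi>)#} + Kst n) (KS1 t \<pi> n)"
  by (rule mt_introOE[of "Out NCh SP" _ "ChB"]) (simp_all add: U KS1_def)

lemma e_ke1: "mt (KE1 t \<pi> n) (KE2 t \<pi> n)"
  by (rule mt_introOE[of "Out NCh SP" _ "Inp NCh VU (EP t)"]) (simp_all add: U KE1_def KE2_def)

lemma e_ks1: "mt (KS1 t \<pi> n) (KS2 \<pi> n)"
  by (rule mt_introOE[of "Out NCh (EP t)" _ "Inp NCh VU SP"]) (simp_all add: U KS1_def KS2_def)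

lemma ei_lamn2: "ms ({#Restart, IHL x t#} + Kst n) (LIn NLam Z) ({#RestartB, IHL x t#} + Kst n)"
  by (rule ms_inE[of "Restart"]) (simp_all add: U )

lemma ei_fvs: "ms ({#num (Suc g), Out NC (stk \<pi>)#} + Kst n) (LIn NSuc Z) ({#num g, Out NC (stk \<pi>)#} + Kst n)"
  by (rule ms_inE[of "num (Suc g)"]) (simp_all add: U )

lemma ei_fvz: "ms ({#num 0, Out NC (stk \<pi>)#} + Kst n) (LIn NZ Z) ({#Out NInit Nil, Out NC (stk \<pi>)#} + Kst n)"
  by (rule ms_inE[of "num 0"]) (simp_all add: U )

lemma ei_c5n: "ms ({#DoneP, IHC#} + Kst n) (LIn NDone Z) (Dead n)"
  by (rule ms_inE[of "DoneP"]) (simp_all add: U Dead_def)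

lemma ei_ke2: "ms (KE2 t \<pi> n) (LIn NEnter Z) ({#Inp NC VU (Par (trm t) (Out NC stk_nil)), Out NC (stk \<pi>)#} + Kst n)"
  by (rule ms_inE[of "EP t"]) (simp_all add: U KE2_def)

lemma ei_ks2: "ms (KS2 \<pi> n) (LIn NSkip Z) ({#Out NInit Nil, Out NC (stk \<pi>)#} + Kst n)"
  by (rule ms_inE[of "SP"]) (simp_all add: U KS2_def)


inductive adm :: "proc multiset \<Rightarrow> conf \<Rightarrow> bool" where
  a_app: "adm ({#trm (App t s), Out NC (stk \<pi>)#} + Kst n) (Ev (App t s) \<pi> n)"
| a_lam0: "adm ({#trm (Lam x t), Out NC (stk \<pi>)#} + Kst n) (Ev (Lam x t) \<pi> n)"
| a_lamc1: "adm ({#Out NHd (trm s), Out NC (stk \<pi>), Out NB Restart, IHL x t#} + Kst n) (Ev (Lam x t) (s # \<pi>) n)"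
| a_lamc2: "adm ({#Out NC (stk \<pi>), Out NB Restart, Inp NB VU (trm (tsubst t x s))#} + Kst n) (Ev (Lam x t) (s # \<pi>) n)"
| a_lamn1: "adm ({#stk_nil, Out NB Restart, IHL x t#} + Kst n) (Ev (Lam x t) [] n)"
| a_lamn2: "adm ({#Restart, IHL x t#} + Kst n) (Ev (Lam x t) [] n)"
| a_r1: "bvs_free t \<subseteq> {x} \<Longrightarrow> adm ({#RestartB, IHL x t#} + Kst n) (Ev (tsubst t x (FV n)) [] (Suc n))"
| a_r2: "bvs_free t \<subseteq> {x} \<Longrightarrow> adm ({#Out NHd (num n), Out NC stk_nil, Out NB Nil, IHL x t#} + Kst (Suc n)) (Ev (tsubst t x (FV n)) [] (Suc n))"
| a_r3: "bvs_free t \<subseteq> {x} \<Longrightarrow> adm ({#Out NC stk_nil, Out NB Nil, Inp NB VU (trm (tsubst t x (FV n)))#} + Kst (Suc n)) (Ev (tsubst t x (FV n)) [] (Suc n))"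
| a_fv: "adm ({#num f, Out NC (stk \<pi>)#} + Kst n) (Ev (FV f) \<pi> n)"
| a_en: "\<forall>s\<in>set \<pi>. wf_term s \<Longrightarrow> adm ({#Inp NC VU (Par (trm t) (Out NC stk_nil)), Out NC (stk \<pi>)#} + Kst n) (Ev t [] n)"
| a_c1: "adm ({#Out NInit Nil, Out NC (stk \<pi>)#} + Kst n) (Co \<pi> n)"
| a_c2: "adm ({#RecB, Out NRec RecP, Out NC (stk \<pi>), Out NK (num n)#}) (Co \<pi> n)"
| a_c3: "adm ({#Out NC (stk \<pi>), ContP#} + Kst n) (Co \<pi> n)"
| a_c4n: "adm ({#stk_nil, Out NB DoneP, IHC#} + Kst n) (Co [] n)"
| a_c5n: "adm ({#DoneP, IHC#} + Kst n) (Co [] n)"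
| a_c4: "adm ({#Out NHd (trm t), Out NC (stk \<pi>), Out NB DoneP, IHC#} + Kst n) (Co (t # \<pi>) n)"
| a_c5: "adm ({#Out NC (stk \<pi>), Out NB DoneP, Inp NB VU (Choice (trm t))#} + Kst n) (Co (t # \<pi>) n)"
| a_c6: "adm ({#Out NCh (EP t), Out NCh SP, ChB, Out NC (stk \<pi>)#} + Kst n) (Co (t # \<pi>) n)"

lemma adm_a0: "wf_term t \<Longrightarrow> adm ({#trm t, Out NC (stk \<pi>)#} + Kst n) (Ev t \<pi> n)"
proof (cases t)
  case (BV x) assume "wf_term t" with BV show ?thesis by (simp add: wf_term_def)
next
  case (FV f) then show ?thesis using adm.a_fv[of f \<pi> n] by simp
next
  case (Lam x u) then show ?thesis using adm.a_lam0[of x u \<pi> n] by simp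
next
  case (App u v) then show ?thesis using adm.a_app[of u v \<pi> n] by simp
qed

lemma wf_ev: "wf_conf (Ev t \<pi> n) \<longleftrightarrow> wf_term t \<and> (\<forall>s\<in>set \<pi>. wf_term s)"
  by (simp add: wf_conf_def)
lemma wf_co: "wf_conf (Co \<pi> n) \<longleftrightarrow> (\<forall>s\<in>set \<pi>. wf_term s)"
  by (simp add: wf_conf_def)

lemma wf_lam: "wf_term (Lam x t) \<longleftrightarrow> bvs_free t \<subseteq> {x}"
  by (auto simp: wf_term_def)

lemma wf_tsubst: "wf_term (Lam x t) \<Longrightarrow> wf_term s \<Longrightarrow> wf_term (tsubst t x s)"
  by (simp add: wf_lam wf_term_def bvs_tsubst_closed)

lemma wf_tsubst_fv: "bvs_free t \<subseteq> {x} \<Longrightarrow> wf_term (tsubst t x (FV n))"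
  by (simp add: wf_term_def bvs_tsubst_closed)

lemma adm_tau:
  assumes "adm M D" "wf_conf D" "mt M M'"
  shows "adm M' D \<or> (\<exists>D'. mtau D D' \<and> adm M' D') \<or> (\<exists>t \<pi> n. D = Co (t # \<pi>) n \<and> (M' = KE1 t \<pi> n \<or> M' = KS1 t \<pi> n))"
  using assms(1)
proof cases
  case (a_app t s \<pi> n)
  then have "M' = {#trm t, Out NC (stk (s # \<pi>))#} + Kst n" using t_app assms(3) by blast
  moreover have "wf_term t" using assms(2) a_app by (auto simp: wf_ev wf_term_def)
  ultimately show ?thesis using a_app adm_a0 by (blast intro: mtau.intros)
next
  case (a_lam0 x t \<pi> n)
  then show ?thesis
  proof (cases \<pi>)
    case Nil
    then have "M' = {#stk_nil, Out NB Restart, IHL x t#} + Kst n" using a_lam0 t_lam0n assms(3) by blast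
    then show ?thesis using a_lam0 Nil adm.a_lamn1 by simp
  next
    case (Cons s \<pi>')
    then have "M' = {#Out NHd (trm s), Out NC (stk \<pi>'), Out NB Restart, IHL x t#} + Kst n" using a_lam0 t_lam0c assms(3) by blast
    then show ?thesis using a_lam0 Cons adm.a_lamc1 by simp
  qed
next
  case (a_lamc1 s \<pi> x t n)
  then have "M' = {#Out NC (stk \<pi>), Out NB Restart, Inp NB VU (trm (tsubst t x s))#} + Kst n" using t_lamc1 assms(3) by blast
  then show ?thesis using a_lamc1 adm.a_lamc2 by simp
next
  case (a_lamc2 \<pi> t x s n)
  then have "M' = {#trm (tsubst t x s), Out NC (stk \<pi>)#} + Kst n" using t_lamc2 assms(3) by blast
  moreover have "wf_term (tsubst t x s)" using assms(2) a_lamc2 by (auto simp: wf_ev intro: wf_tsubst)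
  ultimately show ?thesis using a_lamc2 adm_a0 by (blast intro: mtau.intros)
next
  case (a_lamn1 x t n)
  then have "M' = {#Restart, IHL x t#} + Kst n" using t_lamn1 assms(3) by blast
  then show ?thesis using a_lamn1 adm.a_lamn2 by simp
next
  case (a_lamn2 x t n) then show ?thesis using t_lamn2 assms(3) by blast
next
  case (a_r1 t x n)
  then have "M' = {#Out NHd (num n), Out NC stk_nil, Out NB Nil, IHL x t#} + Kst (Suc n)" using t_r1 assms(3) by blast
  then show ?thesis using a_r1 adm.a_r2 by simp
next
  case (a_r2 t x n)
  then have "M' = {#Out NC stk_nil, Out NB Nil, Inp NB VU (trm (tsubst t x (FV n)))#} + Kst (Suc n)" using t_r2 assms(3) by blast
  then show ?thesis using a_r2 adm.a_r3 by simp
next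
  case (a_r3 t x n)
  then have "M' = {#trm (tsubst t x (FV n)), Out NC (stk [])#} + Kst (Suc n)" using t_r3 assms(3) by blast
  then show ?thesis using a_r3 adm_a0 wf_tsubst_fv by blast
next
  case (a_fv f \<pi> n) then show ?thesis using t_fv assms(3) by blast
next
  case (a_en \<pi> t n)
  then have "M' = {#trm t, Out NC (stk [])#} + Kst n" using t_en assms(3) by blast
  moreover have "wf_term t" using assms(2) a_en by (auto simp: wf_ev)
  ultimately show ?thesis using a_en adm_a0 by blast
next
  case (a_c1 \<pi> n)
  then have "M' = {#RecB, Out NRec RecP, Out NC (stk \<pi>), Out NK (num n)#}" using t_c1 assms(3) by blast
  then show ?thesis using a_c1 adm.a_c2 by simp
next
  case (a_c2 \<pi> n)
  then have "M' = {#Out NC (stk \<pi>), ContP#} + Kst n" using t_c2 assms(3) by blast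
  then show ?thesis using a_c2 adm.a_c3 by simp
next
  case (a_c3 \<pi> n)
  then show ?thesis
  proof (cases \<pi>)
    case Nil
    then have "M' = {#stk_nil, Out NB DoneP, IHC#} + Kst n" using a_c3 t_c3n assms(3) by blast
    then show ?thesis using a_c3 Nil adm.a_c4n by simp
  next
    case (Cons s \<pi>')
    then have "M' = {#Out NHd (trm s), Out NC (stk \<pi>'), Out NB DoneP, IHC#} + Kst n" using a_c3 t_c3c assms(3) by blast
    then show ?thesis using a_c3 Cons adm.a_c4 by simp
  qed
next
  case (a_c4n n)
  then have "M' = {#DoneP, IHC#} + Kst n" using t_c4n assms(3) by blast
  then show ?thesis using a_c4n adm.a_c5n by simp
next
  case (a_c5n n) then show ?thesis using t_c5n assms(3) by blast
next
  case (a_c4 t \<pi> n)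
  then have "M' = {#Out NC (stk \<pi>), Out NB DoneP, Inp NB VU (Choice (trm t))#} + Kst n" using t_c4 assms(3) by blast
  then show ?thesis using a_c4 adm.a_c5 by simp
next
  case (a_c5 \<pi> t n)
  then have "M' = {#Out NCh (EP t), Out NCh SP, ChB, Out NC (stk \<pi>)#} + Kst n" using t_c5 assms(3) by blast
  then show ?thesis using a_c5 adm.a_c6 by simp
next
  case (a_c6 t \<pi> n) then show ?thesis using t_c6 assms(3) by blast
qed

lemma adm_in:
  assumes "adm M D" "wf_conf D" "ms M (LIn a Z) M'" "a \<notin> Hidden"
  shows "(\<exists>x t n. D = Ev (Lam x t) [] n \<and> a = NLam \<and> adm M' (Ev (tsubst t x (FV n)) [] (Suc n))) \<or>
    (\<exists>g \<pi> n. D = Ev (FV (Suc g)) \<pi> n \<and> a = NSuc \<and> adm M' (Ev (FV g) \<pi> n)) \<or>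
    (\<exists>\<pi> n. D = Ev (FV 0) \<pi> n \<and> a = NZ \<and> adm M' (Co \<pi> n)) \<or>
    (\<exists>n. D = Co [] n \<and> a = NDone \<and> M' = Dead n)"
  using assms(1)
proof cases
  case (a_lamn2 x t n)
  then have "a = NLam" "M' = {#RestartB, IHL x t#} + Kst n" using i_lamn2 assms(3,4) by blast+
  moreover have "bvs_free t \<subseteq> {x}" using assms(2) a_lamn2 by (simp add: wf_ev wf_lam)
  ultimately show ?thesis using a_lamn2 adm.a_r1 by simp
next
  case (a_fv f \<pi> n)
  then have "(f = 0 \<and> a = NZ \<and> M' = {#Out NInit Nil, Out NC (stk \<pi>)#} + Kst n) \<or> (\<exists>g. f = Suc g \<and> a = NSuc \<and> M' = {#num g, Out NC (stk \<pi>)#} + Kst n)"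
    using i_fv[OF _ assms(4)] assms(3) by blast
  then show ?thesis using a_fv adm.a_c1 adm.a_fv by auto
next
  case (a_c5n n) then show ?thesis using i_c5n assms(3,4) by blast
next case a_app then show ?thesis using assms(3,4) i_app by blast
next case a_lam0 then show ?thesis using assms(3,4) i_lam0 by blast
next case a_lamc1 then show ?thesis using assms(3,4) i_lamc1 by blast
next case a_lamc2 then show ?thesis using assms(3,4) i_lamc2 by blast
next case a_lamn1 then show ?thesis using assms(3,4) i_lamn1 by blast
next case a_r1 then show ?thesis using assms(3,4) i_r1 by blast
next case a_r2 then show ?thesis using assms(3,4) i_r2 by blast
next case a_r3 then show ?thesis using assms(3,4) i_r3 by blast
next case a_en then show ?thesis using assms(3,4) i_en by blast
next case a_c1 then show ?thesis using assms(3,4) i_c1 by blast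
next case a_c2 then show ?thesis using assms(3,4) i_c2 by blast
next case a_c3 then show ?thesis using assms(3,4) i_c3 by blast
next case a_c4n then show ?thesis using assms(3,4) i_c4n by blast
next case a_c4 then show ?thesis using assms(3,4) i_c4 by blast
next case a_c5 then show ?thesis using assms(3,4) i_c5 by blast
next case a_c6 then show ?thesis using assms(3,4) i_c6 by blast
qed


lemmas cstep = converse_rtranclp_into_rtranclp[where r=mt]
lemmas crefl = rtranclp.rtrancl_refl[where r=mt]

lemma ev_pre:
  assumes "adm M (Ev t \<pi> n)"
  shows "mt\<^sup>*\<^sup>* M ({#trm t, Out NC (stk \<pi>)#} + Kst n) \<or>
    (\<exists>x u s \<pi>'. t = Lam x u \<and> \<pi> = s # \<pi>' \<and> (M = {#Out NHd (trm s), Out NC (stk \<pi>'), Out NB Restart, IHL x u#} + Kst n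
        \<or> M = {#Out NC (stk \<pi>'), Out NB Restart, Inp NB VU (trm (tsubst u x s))#} + Kst n)) \<or>
    (\<exists>x u. t = Lam x u \<and> \<pi> = [] \<and> (M = {#stk_nil, Out NB Restart, IHL x u#} + Kst n \<or> M = {#Restart, IHL x u#} + Kst n))"
  using assms
proof cases
  case (a_r1 u x m)
  have "mt\<^sup>*\<^sup>* ({#RestartB, IHL x u#} + Kst m) ({#trm (tsubst u x (FV m)), Out NC (stk [])#} + Kst (Suc m))"
    using e_r1 e_r2 e_r3 by (meson cstep crefl)
  then show ?thesis using a_r1 by simp
next
  case (a_r2 u x m)
  have "mt\<^sup>*\<^sup>* ({#Out NHd (num m), Out NC stk_nil, Out NB Nil, IHL x u#} + Kst (Suc m)) ({#trm (tsubst u x (FV m)), Out NC (stk [])#} + Kst (Suc m))"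
    using e_r2 e_r3 by (meson cstep crefl)
  then show ?thesis using a_r2 by simp
next
  case (a_r3 u x m)
  have "mt\<^sup>*\<^sup>* ({#Out NC stk_nil, Out NB Nil, Inp NB VU (trm (tsubst u x (FV m)))#} + Kst (Suc m)) ({#trm (tsubst u x (FV m)), Out NC (stk [])#} + Kst (Suc m))"
    using e_r3 by (meson cstep crefl)
  then show ?thesis using a_r3 by simp
next
  case (a_en \<pi>')
  have "mt\<^sup>*\<^sup>* ({#Inp NC VU (Par (trm t) (Out NC stk_nil)), Out NC (stk \<pi>')#} + Kst n) ({#trm t, Out NC (stk [])#} + Kst n)"
    using e_en by (meson cstep crefl)
  then show ?thesis using a_en by simp
qed auto

lemma co_pre:
  assumes "adm M (Co \<pi> n)"
  shows "mt\<^sup>*\<^sup>* M ({#Out NC (stk \<pi>), ContP#} + Kst n) \<or>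
    (\<pi> = [] \<and> (M = {#stk_nil, Out NB DoneP, IHC#} + Kst n \<or> M = {#DoneP, IHC#} + Kst n)) \<or>
    (\<exists>t \<pi>'. \<pi> = t # \<pi>' \<and> (M = {#Out NHd (trm t), Out NC (stk \<pi>'), Out NB DoneP, IHC#} + Kst n \<or>
       M = {#Out NC (stk \<pi>'), Out NB DoneP, Inp NB VU (Choice (trm t))#} + Kst n \<or>
       M = {#Out NCh (EP t), Out NCh SP, ChB, Out NC (stk \<pi>')#} + Kst n))"
  using assms
proof cases
  case a_c1
  have "mt\<^sup>*\<^sup>* ({#Out NInit Nil, Out NC (stk \<pi>)#} + Kst n) ({#Out NC (stk \<pi>), ContP#} + Kst n)"
    using e_c1 e_c2 by (meson cstep crefl)
  then show ?thesis using a_c1 by simp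
next
  case a_c2
  have "mt\<^sup>*\<^sup>* {#RecB, Out NRec RecP, Out NC (stk \<pi>), Out NK (num n)#} ({#Out NC (stk \<pi>), ContP#} + Kst n)"
    using e_c2 by (meson cstep crefl)
  then show ?thesis using a_c2 by simp
qed auto

lemma rd_lam: "adm M (Ev (Lam x t) [] n) \<Longrightarrow> mt\<^sup>*\<^sup>* M ({#Restart, IHL x t#} + Kst n)"
proof -
  assume a: "adm M (Ev (Lam x t) [] n)"
  have 1: "mt\<^sup>*\<^sup>* ({#stk_nil, Out NB Restart, IHL x t#} + Kst n) ({#Restart, IHL x t#} + Kst n)"
    using e_lamn1 by (meson cstep crefl)
  have 2: "mt\<^sup>*\<^sup>* ({#trm (Lam x t), Out NC (stk [])#} + Kst n) ({#Restart, IHL x t#} + Kst n)"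
    using e_lam0n 1 by (meson cstep)
  from ev_pre[OF a] show ?thesis
  proof (elim disjE)
    assume "mt\<^sup>*\<^sup>* M ({#trm (Lam x t), Out NC (stk [])#} + Kst n)"
    with 2 show ?thesis by auto
  qed (use 1 in auto)
qed

lemma rd_fv: "adm M (Ev (FV f) \<pi> n) \<Longrightarrow> mt\<^sup>*\<^sup>* M ({#num f, Out NC (stk \<pi>)#} + Kst n)"
  using ev_pre[of M "FV f" \<pi> n] by auto

lemma next_app: "adm M (Ev (App t s) \<pi> n) \<Longrightarrow> wf_term t \<Longrightarrow> \<exists>M'. mt\<^sup>*\<^sup>* M M' \<and> adm M' (Ev t (s # \<pi>) n)"
proof -
  assume a: "adm M (Ev (App t s) \<pi> n)" "wf_term t"
  then have "mt\<^sup>*\<^sup>* M ({#trm (App t s), Out NC (stk \<pi>)#} + Kst n)" using ev_pre[OF a(1)] by auto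
  then have "mt\<^sup>*\<^sup>* M ({#trm t, Out NC (stk (s # \<pi>))#} + Kst n)" using e_app by (meson rtranclp.rtrancl_into_rtrancl)
  then show ?thesis using adm_a0[OF a(2)] by blast
qed

lemma next_lam: "adm M (Ev (Lam x t) (s # \<pi>) n) \<Longrightarrow> wf_term (tsubst t x s) \<Longrightarrow>
    \<exists>M'. mt\<^sup>*\<^sup>* M M' \<and> adm M' (Ev (tsubst t x s) \<pi> n)"
proof -
  assume a: "adm M (Ev (Lam x t) (s # \<pi>) n)" "wf_term (tsubst t x s)"
  have 3: "mt\<^sup>*\<^sup>* ({#Out NC (stk \<pi>), Out NB Restart, Inp NB VU (trm (tsubst t x s))#} + Kst n) ({#trm (tsubst t x s), Out NC (stk \<pi>)#} + Kst n)"
    using e_lamc2 by (meson cstep crefl)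
  have 2: "mt\<^sup>*\<^sup>* ({#Out NHd (trm s), Out NC (stk \<pi>), Out NB Restart, IHL x t#} + Kst n) ({#trm (tsubst t x s), Out NC (stk \<pi>)#} + Kst n)"
    using e_lamc1 3 by (meson cstep)
  have 1: "mt\<^sup>*\<^sup>* ({#trm (Lam x t), Out NC (stk (s # \<pi>))#} + Kst n) ({#trm (tsubst t x s), Out NC (stk \<pi>)#} + Kst n)"
    using e_lam0c 2 by (meson cstep)
  have "mt\<^sup>*\<^sup>* M ({#trm (tsubst t x s), Out NC (stk \<pi>)#} + Kst n)"
    using ev_pre[OF a(1)]
  proof (elim disjE)
    assume "mt\<^sup>*\<^sup>* M ({#trm (Lam x t), Out NC (stk (s # \<pi>))#} + Kst n)"
    with 1 show ?thesis by auto
  qed (use 2 3 in auto)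
  then show ?thesis using adm_a0[OF a(2)] by blast
qed

lemma adm_next: "adm M D \<Longrightarrow> wf_conf D \<Longrightarrow> mtau D D' \<Longrightarrow> \<exists>M'. mt\<^sup>*\<^sup>* M M' \<and> adm M' D'"
proof -
  assume a: "adm M D" "wf_conf D" "mtau D D'"
  from a(3) show ?thesis
  proof cases
    case (1 t s \<pi> n)
    then show ?thesis using next_app a(1,2) by (auto simp: wf_ev wf_term_def)
  next
    case (2 x t s \<pi> n)
    then show ?thesis using next_lam a(1,2) wf_tsubst by (auto simp: wf_ev)
  qed
qed

lemma adm_star: "mtau\<^sup>*\<^sup>* D D2 \<Longrightarrow> adm M D \<Longrightarrow> wf_conf D \<Longrightarrow> \<exists>M2. mt\<^sup>*\<^sup>* M M2 \<and> adm M2 D2"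
proof (induction arbitrary: M rule: converse_rtranclp_induct)
  case base then show ?case by auto
next
  case (step D D1)
  then obtain M1 where "mt\<^sup>*\<^sup>* M M1" "adm M1 D1" using adm_next by blast
  moreover have "wf_conf D1" using wf_mtau step by blast
  ultimately show ?case using step(3) by (meson rtranclp_trans)
qed

lemma rd_con: "adm M (Co [] n) \<Longrightarrow> mt\<^sup>*\<^sup>* M ({#DoneP, IHC#} + Kst n)"
proof -
  assume a: "adm M (Co [] n)"
  have 1: "mt\<^sup>*\<^sup>* ({#stk_nil, Out NB DoneP, IHC#} + Kst n) ({#DoneP, IHC#} + Kst n)"
    using e_c4n by (meson cstep crefl)
  have 2: "mt\<^sup>*\<^sup>* ({#Out NC (stk []), ContP#} + Kst n) ({#DoneP, IHC#} + Kst n)"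
    using e_c3n 1 by (meson cstep)
  from co_pre[OF a] show ?thesis
  proof (elim disjE)
    assume "mt\<^sup>*\<^sup>* M ({#Out NC (stk []), ContP#} + Kst n)"
    with 2 show ?thesis by auto
  qed (use 1 in auto)
qed

lemma rd_coc: "adm M (Co (t # \<pi>) n) \<Longrightarrow> mt\<^sup>*\<^sup>* M ({#Out NCh (EP t), Out NCh SP, ChB, Out NC (stk \<pi>)#} + Kst n)"
proof -
  assume a: "adm M (Co (t # \<pi>) n)"
  have 3: "mt\<^sup>*\<^sup>* ({#Out NC (stk \<pi>), Out NB DoneP, Inp NB VU (Choice (trm t))#} + Kst n) ({#Out NCh (EP t), Out NCh SP, ChB, Out NC (stk \<pi>)#} + Kst n)"
    using e_c5 by (meson cstep crefl)
  have 2: "mt\<^sup>*\<^sup>* ({#Out NHd (trm t), Out NC (stk \<pi>), Out NB DoneP, IHC#} + Kst n) ({#Out NCh (EP t), Out NCh SP, ChB, Out NC (stk \<pi>)#} + Kst n)"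
    using e_c4 3 by (meson cstep)
  have 1: "mt\<^sup>*\<^sup>* ({#Out NC (stk (t # \<pi>)), ContP#} + Kst n) ({#Out NCh (EP t), Out NCh SP, ChB, Out NC (stk \<pi>)#} + Kst n)"
    using e_c3c 2 by (meson cstep)
  from co_pre[OF a] show ?thesis
  proof (elim disjE)
    assume "mt\<^sup>*\<^sup>* M ({#Out NC (stk (t # \<pi>)), ContP#} + Kst n)"
    with 1 show ?thesis by auto
  qed (use 2 3 in auto)
qed


datatype cl = KC conf | KEc lterm nat | KSc "lterm list" nat | KX

inductive cls :: "proc multiset \<Rightarrow> cl \<Rightarrow> bool" where
  c_kc: "adm M D \<Longrightarrow> mtau\<^sup>*\<^sup>* C D \<Longrightarrow> wf_conf C \<Longrightarrow> cls M (KC C)"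
| c_ke1: "wf_term t \<Longrightarrow> \<forall>s\<in>set \<pi>. wf_term s \<Longrightarrow> cls (KE1 t \<pi> n) (KEc t n)"
| c_ke2: "wf_term t \<Longrightarrow> \<forall>s\<in>set \<pi>. wf_term s \<Longrightarrow> cls (KE2 t \<pi> n) (KEc t n)"
| c_ks1: "wf_term t \<Longrightarrow> \<forall>s\<in>set \<pi>. wf_term s \<Longrightarrow> cls (KS1 t \<pi> n) (KSc \<pi> n)"
| c_ks2: "\<forall>s\<in>set \<pi>. wf_term s \<Longrightarrow> cls (KS2 \<pi> n) (KSc \<pi> n)"
| c_dead: "cls (Dead n) KX"

definition ctau :: "cl \<Rightarrow> cl \<Rightarrow> bool" where
  "ctau k k' = (\<exists>C t \<pi> n. k = KC C \<and> mtau\<^sup>*\<^sup>* C (Co (t # \<pi>) n) \<and> (k' = KEc t n \<or> k' = KSc \<pi> n))"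

definition creach :: "cl \<Rightarrow> cl \<Rightarrow> bool" where
  "creach k k' = (k' = k \<or> ctau k k')"

fun cflag :: "cl \<Rightarrow> name \<Rightarrow> cl \<Rightarrow> bool" where
  "cflag (KC C) a k' = ((a = NLam \<and> (\<exists>x t n. mtau\<^sup>*\<^sup>* C (Ev (Lam x t) [] n) \<and> k' = KC (Ev (tsubst t x (FV n)) [] (Suc n)))) \<or>
     (a = NSuc \<and> (\<exists>g \<pi> n. mtau\<^sup>*\<^sup>* C (Ev (FV (Suc g)) \<pi> n) \<and> k' = KC (Ev (FV g) \<pi> n))) \<or>
     (a = NZ \<and> (\<exists>\<pi> n. mtau\<^sup>*\<^sup>* C (Ev (FV 0) \<pi> n) \<and> k' = KC (Co \<pi> n))) \<or>
     (a = NDone \<and> (\<exists>n. mtau\<^sup>*\<^sup>* C (Co [] n) \<and> k' = KX)))"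
| "cflag (KEc t n) a k' = (a = NEnter \<and> k' = KC (Ev t [] n))"
| "cflag (KSc \<pi> n) a k' = (a = NSkip \<and> k' = KC (Co \<pi> n))"
| "cflag KX a k' = False"

lemma creach_trans: "creach k1 k2 \<Longrightarrow> creach k2 k3 \<Longrightarrow> creach k1 k3"
  unfolding creach_def ctau_def by auto

lemma cls_wf: "cls M (KC C) \<Longrightarrow> wf_conf C"
  by (auto elim: cls.cases)

lemma cls_tau:
  assumes "cls M k" "mt M M'"
  shows "\<exists>k'. cls M' k' \<and> creach k k'"
  using assms(1)
proof cases
  case (c_kc D C)
  have wfD: "wf_conf D" using c_kc wf_mtau_star by blast
  from adm_tau[OF c_kc(2) wfD assms(2)] show ?thesis
  proof (elim disjE exE conjE)
    assume "adm M' D" then show ?thesis using c_kc by (auto intro: cls.intros simp: creach_def)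
  next
    fix D' assume "mtau D D'" "adm M' D'"
    then show ?thesis using c_kc by (auto intro: cls.intros simp: creach_def intro: rtranclp.rtrancl_into_rtrancl)
  next
    fix t \<pi> n assume h: "D = Co (t # \<pi>) n" "M' = KE1 t \<pi> n"
    then have w: "wf_term t" "\<forall>s\<in>set \<pi>. wf_term s" using wfD by (auto simp: wf_co)
    then show ?thesis using h c_kc unfolding creach_def ctau_def by (blast intro: cls.intros)
  next
    fix t \<pi> n assume h: "D = Co (t # \<pi>) n" "M' = KS1 t \<pi> n"
    then have w: "wf_term t" "\<forall>s\<in>set \<pi>. wf_term s" using wfD by (auto simp: wf_co)
    then show ?thesis using h c_kc unfolding creach_def ctau_def by (blast intro: cls.intros)
  qed
next
  case (c_ke1 t \<pi> n)
  then have "M' = KE2 t \<pi> n" using t_ke1 assms(2) by blast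
  then show ?thesis using c_ke1 cls.c_ke2 unfolding creach_def by blast
next
  case (c_ke2 t \<pi> n) then show ?thesis using t_ke2 assms(2) by blast
next
  case (c_ks1 t \<pi> n)
  then have "M' = KS2 \<pi> n" using t_ks1 assms(2) by blast
  then show ?thesis using c_ks1 cls.c_ks2 unfolding creach_def by blast
next
  case (c_ks2 \<pi> n) then show ?thesis using t_ks2 assms(2) by blast
next
  case (c_dead n) then show ?thesis using t_dead assms(2) by blast
qed

lemma cls_in:
  assumes "cls M k" "ms M (LIn a Z) M'" "a \<notin> Hidden"
  shows "\<exists>k'. cls M' k' \<and> cflag k a k'"
  using assms(1)
proof cases
  case (c_kc D C)
  have wfD: "wf_conf D" using c_kc wf_mtau_star by blast
  from adm_in[OF c_kc(2) wfD assms(2,3)] show ?thesis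
  proof (elim disjE exE conjE)
    fix x t n assume h: "D = Ev (Lam x t) [] n" "a = NLam" "adm M' (Ev (tsubst t x (FV n)) [] (Suc n))"
    have "wf_conf (Ev (tsubst t x (FV n)) [] (Suc n))" using wfD h(1) by (simp add: wf_ev wf_lam wf_tsubst_fv)
    then show ?thesis using h c_kc by (auto intro: cls.intros)
  next
    fix g \<pi> n assume h: "D = Ev (FV (Suc g)) \<pi> n" "a = NSuc" "adm M' (Ev (FV g) \<pi> n)"
    have "wf_conf (Ev (FV g) \<pi> n)" using wfD h(1) by (simp add: wf_ev wf_term_def)
    then show ?thesis using h c_kc by (auto intro: cls.intros)
  next
    fix \<pi> n assume h: "D = Ev (FV 0) \<pi> n" "a = NZ" "adm M' (Co \<pi> n)"
    have "wf_conf (Co \<pi> n)" using wfD h(1) by (simp add: wf_ev wf_co)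
    then show ?thesis using h c_kc by (auto intro: cls.intros)
  next
    fix n assume h: "D = Co [] n" "a = NDone" "M' = Dead n"
    then show ?thesis using c_kc by (auto intro: cls.intros)
  qed
next
  case (c_ke1 t \<pi> n) then show ?thesis using i_ke1 assms(2,3) by blast
next
  case (c_ke2 t \<pi> n)
  then have "a = NEnter" "M' = {#Inp NC VU (Par (trm t) (Out NC stk_nil)), Out NC (stk \<pi>)#} + Kst n"
    using i_ke2 assms(2,3) by blast+
  moreover have "adm M' (Ev t [] n)" using calculation(2) adm.a_en[of \<pi> t n] c_ke2 by simp
  moreover have "wf_conf (Ev t [] n)" using c_ke2 by (simp add: wf_ev)
  ultimately show ?thesis using c_ke2 by (auto intro: cls.intros)
next
  case (c_ks1 t \<pi> n) then show ?thesis using i_ks1 assms(2,3) by blast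
next
  case (c_ks2 \<pi> n)
  then have "a = NSkip" "M' = {#Out NInit Nil, Out NC (stk \<pi>)#} + Kst n"
    using i_ks2 assms(2,3) by blast+
  moreover have "adm M' (Co \<pi> n)" using calculation(2) adm.a_c1[of \<pi> n] by simp
  moreover have "wf_conf (Co \<pi> n)" using c_ks2 by (simp add: wf_co)
  ultimately show ?thesis using c_ks2 by (auto intro: cls.intros)
next
  case (c_dead n) then show ?thesis using i_dead assms(2,3) by blast
qed


lemma fin_lam: "\<not> mtau (Ev (Lam x t) [] n) X" by (auto elim: mtau.cases)
lemma fin_fv: "\<not> mtau (Ev (FV f) \<pi> n) X" by (auto elim: mtau.cases)
lemma fin_co: "\<not> mtau (Co \<pi> n) X" by (auto elim: mtau.cases)

lemma cls_reach_final:
  assumes "cls M (KC C)" "mtau\<^sup>*\<^sup>* C F" "\<And>X. \<not> mtau F X"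
  shows "\<exists>M2. mt\<^sup>*\<^sup>* M M2 \<and> adm M2 F \<and> wf_conf F"
proof -
  from assms(1) obtain D where D: "adm M D" "mtau\<^sup>*\<^sup>* C D" "wf_conf C" by (auto elim: cls.cases)
  have "mtau\<^sup>*\<^sup>* D F" using star_to_final[OF assms(2) D(2) assms(3)] .
  moreover have "wf_conf D" using D wf_mtau_star by blast
  ultimately show ?thesis using adm_star D(1) wf_mtau_star by blast
qed

lemma cls_ctau:
  assumes "cls M k" "ctau k k'"
  shows "\<exists>M'. mt\<^sup>*\<^sup>* M M' \<and> cls M' k'"
proof -
  from assms(2) obtain C t \<pi> n where h: "k = KC C" "mtau\<^sup>*\<^sup>* C (Co (t # \<pi>) n)" "k' = KEc t n \<or> k' = KSc \<pi> n"
    unfolding ctau_def by blast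
  obtain M2 where M2: "mt\<^sup>*\<^sup>* M M2" "adm M2 (Co (t # \<pi>) n)" "wf_conf (Co (t # \<pi>) n)"
    using cls_reach_final[OF assms(1)[unfolded h(1)] h(2) fin_co] by blast
  have U: "mt\<^sup>*\<^sup>* M ({#Out NCh (EP t), Out NCh SP, ChB, Out NC (stk \<pi>)#} + Kst n)"
    using M2 rd_coc by (meson rtranclp_trans)
  have w: "wf_term t" "\<forall>s\<in>set \<pi>. wf_term s" using M2(3) by (auto simp: wf_co)
  from h(3) show ?thesis
  proof
    assume "k' = KEc t n"
    then show ?thesis using U e_c6e w cls.c_ke1 by (meson rtranclp.rtrancl_into_rtrancl)
  next
    assume "k' = KSc \<pi> n"
    then show ?thesis using U e_c6s w cls.c_ks1 by (meson rtranclp.rtrancl_into_rtrancl)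
  qed
qed

lemma cls_cflag:
  assumes "cls M k" "cflag k a k'"
  shows "\<exists>Ma Mb. mt\<^sup>*\<^sup>* M Ma \<and> ms Ma (LIn a Z) Mb \<and> cls Mb k'"
proof (cases k)
  case (KC C)
  note c = assms(1)[unfolded KC]
  have wfC: "wf_conf C" using cls_wf c .
  from assms(2)[unfolded KC cflag.simps] show ?thesis
  proof (elim disjE exE conjE)
    fix x t n assume h: "a = NLam" "mtau\<^sup>*\<^sup>* C (Ev (Lam x t) [] n)" "k' = KC (Ev (tsubst t x (FV n)) [] (Suc n))"
    obtain M2 where M2: "mt\<^sup>*\<^sup>* M M2" "adm M2 (Ev (Lam x t) [] n)" "wf_conf (Ev (Lam x t) [] n)"
      using cls_reach_final[OF c h(2) fin_lam] by blast
    have r: "mt\<^sup>*\<^sup>* M ({#Restart, IHL x t#} + Kst n)" using M2 rd_lam by (meson rtranclp_trans)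
    have b: "bvs_free t \<subseteq> {x}" using M2(3) by (simp add: wf_ev wf_lam)
    have "cls ({#RestartB, IHL x t#} + Kst n) k'"
      using h(3) adm.a_r1[OF b] wf_tsubst_fv[OF b] by (auto intro!: cls.c_kc simp: wf_ev)
    then show ?thesis using r ei_lamn2 h(1) by blast
  next
    fix g \<pi> n assume h: "a = NSuc" "mtau\<^sup>*\<^sup>* C (Ev (FV (Suc g)) \<pi> n)" "k' = KC (Ev (FV g) \<pi> n)"
    obtain M2 where M2: "mt\<^sup>*\<^sup>* M M2" "adm M2 (Ev (FV (Suc g)) \<pi> n)" "wf_conf (Ev (FV (Suc g)) \<pi> n)"
      using cls_reach_final[OF c h(2) fin_fv] by blast
    have r: "mt\<^sup>*\<^sup>* M ({#num (Suc g), Out NC (stk \<pi>)#} + Kst n)" using M2 rd_fv by (meson rtranclp_trans)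
    have "cls ({#num g, Out NC (stk \<pi>)#} + Kst n) k'"
      using h(3) adm.a_fv[of g \<pi> n] M2(3) by (auto intro!: cls.c_kc simp: wf_ev wf_term_def)
    then show ?thesis using r ei_fvs h(1) by blast
  next
    fix \<pi> n assume h: "a = NZ" "mtau\<^sup>*\<^sup>* C (Ev (FV 0) \<pi> n)" "k' = KC (Co \<pi> n)"
    obtain M2 where M2: "mt\<^sup>*\<^sup>* M M2" "adm M2 (Ev (FV 0) \<pi> n)" "wf_conf (Ev (FV 0) \<pi> n)"
      using cls_reach_final[OF c h(2) fin_fv] by blast
    have r: "mt\<^sup>*\<^sup>* M ({#num 0, Out NC (stk \<pi>)#} + Kst n)" using M2 rd_fv by (meson rtranclp_trans)
    have "cls ({#Out NInit Nil, Out NC (stk \<pi>)#} + Kst n) k'"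
      using h(3) adm.a_c1[of \<pi> n] M2(3) by (auto intro!: cls.c_kc simp: wf_ev wf_co)
    then show ?thesis using r ei_fvz h(1) by blast
  next
    fix n assume h: "a = NDone" "mtau\<^sup>*\<^sup>* C (Co [] n)" "k' = KX"
    obtain M2 where M2: "mt\<^sup>*\<^sup>* M M2" "adm M2 (Co [] n)"
      using cls_reach_final[OF c h(2) fin_co] by blast
    have r: "mt\<^sup>*\<^sup>* M ({#DoneP, IHC#} + Kst n)" using M2 rd_con by (meson rtranclp_trans)
    then show ?thesis using ei_c5n h(1,3) cls.c_dead by blast
  qed
next
  case (KEc t n)
  with assms(2) have h: "a = NEnter" "k' = KC (Ev t [] n)" by auto
  from assms(1)[unfolded KEc] obtain \<pi> where M: "M = KE1 t \<pi> n \<or> M = KE2 t \<pi> n" "wf_term t" "\<forall>s\<in>set \<pi>. wf_term s"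
    by (cases rule: cls.cases) auto
  have r: "mt\<^sup>*\<^sup>* M (KE2 t \<pi> n)" using M(1) e_ke1 by auto
  have "cls ({#Inp NC VU (Par (trm t) (Out NC stk_nil)), Out NC (stk \<pi>)#} + Kst n) k'"
    using h(2) adm.a_en[of \<pi> t n] M(2,3) by (auto intro!: cls.c_kc simp: wf_ev)
  then show ?thesis using r ei_ke2 h(1) by blast
next
  case (KSc \<pi> n)
  with assms(2) have h: "a = NSkip" "k' = KC (Co \<pi> n)" by auto
  from assms(1)[unfolded KSc] obtain t where M: "M = KS1 t \<pi> n \<or> M = KS2 \<pi> n" "\<forall>s\<in>set \<pi>. wf_term s"
    by (cases rule: cls.cases) auto
  have r: "mt\<^sup>*\<^sup>* M (KS2 \<pi> n)" using M(1) e_ks1 by auto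
  have "cls ({#Out NInit Nil, Out NC (stk \<pi>)#} + Kst n) k'"
    using h(2) adm.a_c1[of \<pi> n] M(2) by (auto intro!: cls.c_kc simp: wf_co)
  then show ?thesis using r ei_ks2 h(1) by blast
next
  case KX with assms(2) show ?thesis by simp
qed

lemma fv_stk: "\<forall>s\<in>set \<pi>. wf_term s \<Longrightarrow> fv (stk \<pi>) = {}"
  by (induction \<pi>) (auto simp: stk_nil_def)

lemma fv_stk': "\<forall>s\<in>set \<pi>. bvs_free s = {} \<Longrightarrow> fv (stk \<pi>) = {}"
  using fv_stk by (simp add: wf_term_def)

lemma not_out[simp]: "RestartB \<noteq> Out a X" "IHL x t \<noteq> Out a X" "stk_nil \<noteq> Out a X" "IHC \<noteq> Out a X"
  "EP t \<noteq> Out a X" "SP \<noteq> Out a X" "DoneP \<noteq> Out a X" "ChB \<noteq> Out a X" "RecB \<noteq> Out a X" "ContP \<noteq> Out a X"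
  "Restart \<noteq> Out a X" "RecP \<noteq> Out a X"
  by (auto simp: RestartB_def IHL_def stk_nil_def IHC_def EP_def SP_def DoneP_def ChB_def RecB_def ContP_def Restart_def RecP_def)

lemma fv_IHL: "fv (IHL x t) = LV ` bvs_free t - {LV x}"
  by (auto simp: IHL_def fv_trm)

lemma fv_EP: "fv (EP t) = LV ` bvs_free t"
  by (auto simp: EP_def fv_trm)

lemma fv_Choice: "fv (Choice P) = fv P - {VU}"
  by (auto simp: Choice_eq SP_def ChB_def)

lemma sysinv_K: "sysinv Hidden (A + Kst n) \<longleftrightarrow> sysinv Hidden A"
  by (auto simp: sysinv_def Kst_def Hidden_def RecP_eq)

lemma adm_inv: "adm M D \<Longrightarrow> wf_conf D \<Longrightarrow> sysinv Hidden M"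
proof (induction rule: adm.induct)
  case (a_lamc2 \<pi> t x s n)
  then have "wf_term (tsubst t x s)" by (auto simp: wf_ev intro: wf_tsubst)
  with a_lamc2 show ?case by (auto simp: Kst_def RecP_eq sysinv_def Hidden_def wf_ev fv_stk fv_stk' Restart_eq)
next
  case (a_r3 t x n)
  then have "wf_term (tsubst t x (FV n))" by (simp add: wf_tsubst_fv)
  with a_r3 show ?case by (auto simp: Kst_def RecP_eq sysinv_def Hidden_def wf_ev fv_stk)
qed (auto simp: Kst_def RecP_eq sysinv_def Hidden_def wf_ev wf_co fv_stk fv_stk' fv_IHL fv_EP fv_Choice wf_lam wf_term_def fv_trm
   Restart_eq RecB_def ContP_eq)

lemma cls_inv: "cls M k \<Longrightarrow> sysinv Hidden M"
proof (induction rule: cls.induct)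
  case (c_kc M D C)
  then show ?case using adm_inv wf_mtau_star by blast
qed (auto simp: KE1_def KE2_def KS1_def KS2_def Dead_def Kst_def RecP_eq sysinv_def Hidden_def fv_stk fv_stk' fv_EP wf_term_def)


fun relk :: "cl \<Rightarrow> cl \<Rightarrow> bool" where
  "relk (KC C1) (KC C2) = mach_bisimilar C1 C2"
| "relk (KEc t1 n1) (KEc t2 n2) = mach_bisimilar (Ev t1 [] n1) (Ev t2 [] n2)"
| "relk (KSc \<pi>1 n1) (KSc \<pi>2 n2) = mach_bisimilar (Co \<pi>1 n1) (Co \<pi>2 n2)"
| "relk KX KX = True"
| "relk _ _ = False"

lemma relk_sym: "relk k1 k2 \<Longrightarrow> relk k2 k1"
  by (cases k1; cases k2) (auto intro: mb_sym)

lemma wstepI: "mtau\<^sup>*\<^sup>* C D \<Longrightarrow> mstep D F C' \<Longrightarrow> wstep C F C'"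
  unfolding wstep_def by blast

lemma relk_ctau:
  assumes "relk k1 k2" "ctau k1 k1'"
  shows "\<exists>k2'. ctau k2 k2' \<and> relk k1' k2'"
proof -
  from assms(2) obtain C1 t1 \<pi>1 n1 where h: "k1 = KC C1" "mtau\<^sup>*\<^sup>* C1 (Co (t1 # \<pi>1) n1)" "k1' = KEc t1 n1 \<or> k1' = KSc \<pi>1 n1"
    unfolding ctau_def by blast
  from assms(1) h(1) obtain C2 where C2: "k2 = KC C2" "mach_bisimilar C1 C2" by (cases k2) auto
  from h(3) show ?thesis
  proof
    assume k: "k1' = KEc t1 n1"
    have "wstep C1 FEnter (Ev t1 [] n1)" using h(2) by (blast intro: wstepI mstep.intros)
    then obtain C2' where "wstep C2 FEnter C2'" "mach_bisimilar (Ev t1 [] n1) C2'" using mb_unfold(2) C2(2) by blast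
    then obtain D2 where "mtau\<^sup>*\<^sup>* C2 D2" "mstep D2 FEnter C2'" "mach_bisimilar (Ev t1 [] n1) C2'" unfolding wstep_def by blast
    then obtain t2 \<pi>2 n2 where "D2 = Co (t2 # \<pi>2) n2" "C2' = Ev t2 [] n2" "mtau\<^sup>*\<^sup>* C2 D2" "mach_bisimilar (Ev t1 [] n1) C2'"
      by (auto elim: mstep.cases)
    then show ?thesis using k C2(1) unfolding ctau_def by (intro exI[of _ "KEc t2 n2"]) auto
  next
    assume k: "k1' = KSc \<pi>1 n1"
    have "wstep C1 FSkip (Co \<pi>1 n1)" using h(2) by (blast intro: wstepI mstep.intros)
    then obtain C2' where "wstep C2 FSkip C2'" "mach_bisimilar (Co \<pi>1 n1) C2'" using mb_unfold(2) C2(2) by blast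
    then obtain D2 where "mtau\<^sup>*\<^sup>* C2 D2" "mstep D2 FSkip C2'" "mach_bisimilar (Co \<pi>1 n1) C2'" unfolding wstep_def by blast
    then obtain t2 \<pi>2 n2 where "D2 = Co (t2 # \<pi>2) n2" "C2' = Co \<pi>2 n2" "mtau\<^sup>*\<^sup>* C2 D2" "mach_bisimilar (Co \<pi>1 n1) C2'"
      by (auto elim: mstep.cases)
    then show ?thesis using k C2(1) unfolding ctau_def by (intro exI[of _ "KSc \<pi>2 n2"]) auto
  qed
qed

lemma relk_cflag:
  assumes "relk k1 k2" "cflag k1 a k1'"
  shows "\<exists>k2'. cflag k2 a k2' \<and> relk k1' k2'"
proof (cases k1)
  case (KC C1)
  from assms(1) KC obtain C2 where C2: "k2 = KC C2" "mach_bisimilar C1 C2" by (cases k2) auto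
  from assms(2)[unfolded KC cflag.simps] show ?thesis
  proof (elim disjE exE conjE)
    fix x t n assume h: "a = NLam" "mtau\<^sup>*\<^sup>* C1 (Ev (Lam x t) [] n)" "k1' = KC (Ev (tsubst t x (FV n)) [] (Suc n))"
    have "wstep C1 FLam (Ev (tsubst t x (FV n)) [] (Suc n))" using h(2) by (blast intro: wstepI mstep.intros)
    then obtain C2' D2 where "mtau\<^sup>*\<^sup>* C2 D2" "mstep D2 FLam C2'" "mach_bisimilar (Ev (tsubst t x (FV n)) [] (Suc n)) C2'"
      using mb_unfold(2) C2(2) unfolding wstep_def by blast
    then obtain y u m where "D2 = Ev (Lam y u) [] m" "C2' = Ev (tsubst u y (FV m)) [] (Suc m)" "mtau\<^sup>*\<^sup>* C2 D2"
      "mach_bisimilar (Ev (tsubst t x (FV n)) [] (Suc n)) C2'" by (auto elim: mstep.cases)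
    then show ?thesis using h C2(1) by (intro exI[of _ "KC C2'"]) auto
  next
    fix g \<pi> n assume h: "a = NSuc" "mtau\<^sup>*\<^sup>* C1 (Ev (FV (Suc g)) \<pi> n)" "k1' = KC (Ev (FV g) \<pi> n)"
    have "wstep C1 (FFree (Suc g)) (Co \<pi> n)" using h(2) by (blast intro: wstepI mstep.intros)
    then obtain C2' D2 where "mtau\<^sup>*\<^sup>* C2 D2" "mstep D2 (FFree (Suc g)) C2'" "mach_bisimilar (Co \<pi> n) C2'"
      using mb_unfold(2) C2(2) unfolding wstep_def by blast
    then obtain \<pi>2 n2 where "D2 = Ev (FV (Suc g)) \<pi>2 n2" "C2' = Co \<pi>2 n2" "mtau\<^sup>*\<^sup>* C2 D2"
      "mach_bisimilar (Co \<pi> n) C2'" by (auto elim: mstep.cases)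
    then show ?thesis using h C2(1) mb_fv by (intro exI[of _ "KC (Ev (FV g) \<pi>2 n2)"]) auto
  next
    fix \<pi> n assume h: "a = NZ" "mtau\<^sup>*\<^sup>* C1 (Ev (FV 0) \<pi> n)" "k1' = KC (Co \<pi> n)"
    have "wstep C1 (FFree 0) (Co \<pi> n)" using h(2) by (blast intro: wstepI mstep.intros)
    then obtain C2' D2 where "mtau\<^sup>*\<^sup>* C2 D2" "mstep D2 (FFree 0) C2'" "mach_bisimilar (Co \<pi> n) C2'"
      using mb_unfold(2) C2(2) unfolding wstep_def by blast
    then obtain \<pi>2 n2 where "D2 = Ev (FV 0) \<pi>2 n2" "C2' = Co \<pi>2 n2" "mtau\<^sup>*\<^sup>* C2 D2"
      "mach_bisimilar (Co \<pi> n) C2'" by (auto elim: mstep.cases)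
    then show ?thesis using h C2(1) by (intro exI[of _ "KC C2'"]) auto
  next
    fix n assume h: "a = NDone" "mtau\<^sup>*\<^sup>* C1 (Co [] n)" "k1' = KX"
    have "wterm C1 FDone" using h(2) unfolding wterm_def by (blast intro: mterm.intros)
    then obtain D2 where "mtau\<^sup>*\<^sup>* C2 D2" "mterm D2 FDone" using mb_unfold(3) C2(2) unfolding wterm_def by blast
    then obtain n2 where "D2 = Co [] n2" "mtau\<^sup>*\<^sup>* C2 D2" by (auto elim: mterm.cases)
    then show ?thesis using h C2(1) by (intro exI[of _ KX]) auto
  qed
next
  case (KEc t1 n1)
  with assms obtain t2 n2 where "k2 = KEc t2 n2" by (cases k2) auto
  with assms KEc show ?thesis by auto
next
  case (KSc \<pi>1 n1)
  with assms obtain \<pi>2 n2 where "k2 = KSc \<pi>2 n2" by (cases k2) auto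
  with assms KSc show ?thesis by auto
next
  case KX with assms show ?thesis by auto
qed

definition Srel :: "proc multiset \<Rightarrow> proc multiset \<Rightarrow> bool" where
  "Srel M1 M2 = (\<exists>k1 k2. cls M1 k1 \<and> cls M2 k2 \<and> relk k1 k2)"

lemma Srel_sysbisim: "sysbisim Hidden Srel"
  unfolding sysbisim_def
proof (intro conjI allI impI)
  show "symp Srel" unfolding symp_def Srel_def using relk_sym by blast
next
  fix M1 M2 assume "Srel M1 M2"
  then obtain k1 k2 where k: "cls M1 k1" "cls M2 k2" "relk k1 k2" unfolding Srel_def by blast
  show "sysinv Hidden M1" using cls_inv k(1) .
  {
    fix M1' assume "mt M1 M1'"
    then obtain k1' where k1': "cls M1' k1'" "creach k1 k1'" using cls_tau k(1) by blast
    show "\<exists>M2'. mt\<^sup>*\<^sup>* M2 M2' \<and> Srel M1' M2'"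
    proof (cases "k1' = k1")
      case True then show ?thesis using k k1' unfolding Srel_def by blast
    next
      case False
      then have "ctau k1 k1'" using k1'(2) unfolding creach_def by blast
      then obtain k2' where "ctau k2 k2'" "relk k1' k2'" using relk_ctau k(3) by blast
      then obtain M2' where "mt\<^sup>*\<^sup>* M2 M2'" "cls M2' k2'" using cls_ctau k(2) by blast
      then show ?thesis using k1' \<open>relk k1' k2'\<close> unfolding Srel_def by blast
    qed
  }
  {
    fix a X M1' assume a: "a \<notin> Hidden" "fv X = {}" "ms M1 (LIn a X) M1'"
    then obtain k1' where k1': "cls M1' k1'" "cflag k1 a k1'" using cls_in k(1) by blast
    then obtain k2' where "cflag k2 a k2'" "relk k1' k2'" using relk_cflag k(3) by blast
    then obtain Ma Mb where "mt\<^sup>*\<^sup>* M2 Ma" "ms Ma (LIn a X) Mb" "cls Mb k2'" using cls_cflag k(2) by blast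
    then show "\<exists>M2a M2'. mt\<^sup>*\<^sup>* M2 M2a \<and> ms M2a (LIn a X) M2' \<and> Srel M1' M2'"
      using k1' \<open>relk k1' k2'\<close> unfolding Srel_def by blast
  }
qed

lemma comps_tr_ev: "comps (tr_conf (Ev t \<pi> n)) = {#trm t, Out NC (stk \<pi>)#} + Kst n"
  by (simp add: Kst_def RecP_eq)

lemma comps_tr_co: "comps (tr_conf (Co \<pi> n)) = {#Out NC (stk \<pi>), ContP#} + Kst n"
  by (simp add: Kst_def RecP_eq ContP_eq)

lemma cls_tr: "wf_conf C \<Longrightarrow> cls (comps (tr_conf C)) (KC C)"
proof (cases C)
  case (Ev t \<pi> n)
  assume w: "wf_conf C"
  then have "adm ({#trm t, Out NC (stk \<pi>)#} + Kst n) (Ev t \<pi> n)" using Ev adm_a0 by (simp add: wf_ev)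
  then have "adm (comps (tr_conf C)) C" using Ev comps_tr_ev by metis
  then show ?thesis using w by (blast intro: cls.c_kc)
next
  case (Co \<pi> n)
  assume w: "wf_conf C"
  have "adm (comps (tr_conf C)) C" using Co adm.a_c3 comps_tr_co by metis
  then show ?thesis using w by (blast intro: cls.c_kc)
qed

theorem dir1: "wf_conf C \<Longrightarrow> wf_conf C' \<Longrightarrow> mach_bisimilar C C' \<Longrightarrow> barbed_equiv Hidden (tr_conf C) (tr_conf C')"
proof -
  assume a: "wf_conf C" "wf_conf C'" "mach_bisimilar C C'"
  have "Srel (comps (tr_conf C)) (comps (tr_conf C'))" unfolding Srel_def
    using cls_tr[OF a(1)] cls_tr[OF a(2)] a(3) relk.simps(1) by blast
  then show ?thesis by (rule sysbisim_equiv[OF Srel_sysbisim])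
qed

lemma cls_equiv: "cls (comps P) k \<Longrightarrow> cls (comps Q) k' \<Longrightarrow> relk k k' \<Longrightarrow> barbed_equiv Hidden P Q"
  by (rule sysbisim_equiv[OF Srel_sysbisim]) (unfold Srel_def, blast)

lemma relk_refl: "relk k k"
  by (cases k) (auto intro: mb_refl)


fun apath :: "cl \<Rightarrow> name list \<Rightarrow> cl \<Rightarrow> bool" where
  "apath k [] k' = creach k k'"
| "apath k (a # w) k' = (\<exists>k1 k2. creach k k1 \<and> cflag k1 a k2 \<and> apath k2 w k')"

lemma apath_creach: "apath k w k1 \<Longrightarrow> creach k1 k2 \<Longrightarrow> apath k w k2"
  by (induction w arbitrary: k) (auto intro: creach_trans)

lemma apath_snoc: "apath k w k1 \<Longrightarrow> cflag k1 a k2 \<Longrightarrow> apath k (w @ [a]) k2"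
  by (induction w arbitrary: k) (auto simp: creach_def)

fun tp :: "name list \<Rightarrow> proc" where
  "tp [] = Nil"
| "tp (a # w) = Par (Out a Nil) (tp w)"

lemma comps_tp: "comps (tp w) = mset (map (\<lambda>a. Out a Nil) w)"
  by (induction w) auto

lemma fn_tp: "fn (tp w) = set w" by (induction w) auto
lemma fv_tp: "fv (tp w) = {}" by (induction w) auto

lemma comm_test: "ms M (LIn a X) M' \<Longrightarrow> mt (M + {#Out a X#}) M'"
proof -
  assume "ms M (LIn a X) M'"
  then obtain y Q where h: "Inp a y Q \<in># M" "M' = M - {#Inp a y Q#} + comps (psubst Q y X)"
    unfolding ms.simps by blast
  show ?thesis unfolding mt_def ms.simps
    apply (rule exI[of _ a], rule exI[of _ X], rule exI[of _ y], rule exI[of _ Q])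
    using h by (auto simp: multiset_eq_iff count_greater_zero_iff[symmetric] simp del: count_greater_zero_iff)
qed

lemma cls_tau_star: "mt\<^sup>*\<^sup>* M M' \<Longrightarrow> cls M k \<Longrightarrow> \<exists>k'. cls M' k' \<and> creach k k'"
proof (induction rule: rtranclp_induct)
  case base then show ?case by (auto simp: creach_def)
next
  case (step M1 M2)
  then obtain k1 where "cls M1 k1" "creach k k1" by blast
  then obtain k2 where "cls M2 k2" "creach k1 k2" using cls_tau step(2) by blast
  then show ?case using \<open>creach k k1\<close> creach_trans by blast
qed

lemma reach:
  assumes "mt\<^sup>*\<^sup>* (T + M) N" "cls M k" "\<forall>p\<in>#T. \<exists>a. p = Out a Nil \<and> a \<notin> Hidden"
  shows "\<exists>T' M' w k'. N = T' + M' \<and> cls M' k' \<and> apath k w k' \<and> T = T' + mset (map (\<lambda>a. Out a Nil) w)"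
  using assms(1)
proof (induction rule: rtranclp_induct)
  case base
  then show ?case using assms(2) by (intro exI[of _ T] exI[of _ M] exI[of _ "[]"] exI[of _ k]) (auto simp: creach_def)
next
  case (step N N')
  then obtain T' M' w k' where h: "N = T' + M'" "cls M' k'" "apath k w k'" "T = T' + mset (map (\<lambda>a. Out a Nil) w)"
    by blast
  have T'out: "\<forall>p\<in>#T'. \<exists>a. p = Out a Nil \<and> a \<notin> Hidden" using assms(3) h(4) by auto
  from step(2) obtain a X y Q where s: "Out a X \<in># N" "Inp a y Q \<in># N"
    "N' = N - {#Out a X, Inp a y Q#} + comps (psubst Q y X)" unfolding mt_def ms.simps by blast
  have iM: "Inp a y Q \<in># M'" using s(2) h(1) T'out by auto
  show ?case
  proof (cases "Out a X \<in># M'")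
    case True
    define M'' where "M'' = M' - {#Out a X, Inp a y Q#} + comps (psubst Q y X)"
    have "mt M' M''" unfolding mt_def ms.simps M''_def using True iM by blast
    then obtain k'' where "cls M'' k''" "creach k' k''" using cls_tau h(2) by blast
    moreover have "N' = T' + M''" using s(3) h(1) True iM unfolding M''_def
      by (auto simp: multiset_eq_iff count_greater_zero_iff[symmetric] simp del: count_greater_zero_iff)
    ultimately show ?thesis using h apath_creach by blast
  next
    case False
    then have oT: "Out a X \<in># T'" using s(1) h(1) by auto
    then have X: "X = Nil" "a \<notin> Hidden" using T'out by auto
    define M'' where "M'' = M' - {#Inp a y Q#} + comps (psubst Q y X)"
    have "ms M' (LIn a X) M''" unfolding ms.simps M''_def using iM by blast
    then obtain k'' where "cls M'' k''" "cflag k' a k''" using cls_in h(2) X(2) by blast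
    moreover have "N' = (T' - {#Out a X#}) + M''" using s(3) h(1) oT iM unfolding M''_def
      by (auto simp: multiset_eq_iff count_greater_zero_iff[symmetric] simp del: count_greater_zero_iff)
    moreover have "T = (T' - {#Out a X#}) + mset (map (\<lambda>a. Out a Nil) (w @ [a]))" using h(4) oT X(1)
      by (auto simp: multiset_eq_iff count_greater_zero_iff[symmetric] simp del: count_greater_zero_iff)
    ultimately show ?thesis using h apath_snoc by blast
  qed
qed

lemma no_out_barb: "cls (comps P) k \<Longrightarrow> weak_barb Hidden P (BOut a) \<Longrightarrow> False"
proof -
  assume a: "cls (comps P) k" "weak_barb Hidden P (BOut a)"
  then obtain M' where m: "mt\<^sup>*\<^sup>* (comps P) M'" "mbarb Hidden M' (BOut a)" unfolding weak_barb_m by blast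
  obtain k' where "cls M' k'" using cls_tau_star[OF m(1) a(1)] by blast
  moreover obtain X where "a \<notin> Hidden" "Out a X \<in># M'" using m(2) unfolding mbarb_def by auto
  ultimately have "cls M' k'" "a \<notin> Hidden" "Out a X \<in># M'" by auto
  then show False using cls_inv[of M' k'] unfolding sysinv_def by auto
qed

lemma wbarb_sound:
  assumes "cls (comps Q) k" "weak_barb Hidden Q (BIn a)"
  shows "\<exists>k1 k2. creach k k1 \<and> cflag k1 a k2"
proof -
  obtain M' where m: "mt\<^sup>*\<^sup>* (comps Q) M'" "mbarb Hidden M' (BIn a)" using assms(2) unfolding weak_barb_m by blast
  obtain k1 where "cls M' k1" "creach k k1" using cls_tau_star[OF m(1) assms(1)] by blast
  moreover obtain y R where "a \<notin> Hidden" "Inp a y R \<in># M'" using m(2) unfolding mbarb_def by auto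
  ultimately have k1: "cls M' k1" "creach k k1" "a \<notin> Hidden" "Inp a y R \<in># M'" by auto
  then have "ms M' (LIn a Nil) (M' - {#Inp a y R#} + comps (psubst R y Nil))" unfolding ms.simps by blast
  then obtain k2 where "cflag k1 a k2" using cls_in k1 by blast
  then show ?thesis using k1 by blast
qed

lemma wbarb_complete:
  assumes "cls (comps P) k" "cflag k a k'" "a \<notin> Hidden"
  shows "weak_barb Hidden P (BIn a)"
proof -
  obtain Ma Mb where "mt\<^sup>*\<^sup>* (comps P) Ma" "ms Ma (LIn a Nil) Mb" using cls_cflag[OF assms(1,2)] by blast
  moreover from this(2) have "mbarb Hidden Ma (BIn a)" using assms(3) unfolding ms.simps mbarb_def by auto
  ultimately show ?thesis unfolding weak_barb_m by blast
qed

lemma wbarb_complete2: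
  assumes "cls (comps P) k" "ctau k k1" "cflag k1 a k'" "a \<notin> Hidden"
  shows "weak_barb Hidden P (BIn a)"
proof -
  obtain M1 where M1: "mt\<^sup>*\<^sup>* (comps P) M1" "cls M1 k1" using cls_ctau[OF assms(1,2)] by blast
  obtain Ma Mb where "mt\<^sup>*\<^sup>* M1 Ma" "ms Ma (LIn a Nil) Mb" using cls_cflag[OF M1(2) assms(3)] by blast
  moreover from this(2) have "mbarb Hidden Ma (BIn a)" using assms(4) unfolding ms.simps mbarb_def by auto
  ultimately show ?thesis unfolding weak_barb_m using M1(1) by (meson rtranclp_trans)
qed

lemma ctau_KE: "ctau (KEc t n) k = False" "ctau (KSc \<pi> n) k = False" "ctau KX k = False"
  unfolding ctau_def by auto

lemma committed_contra:
  assumes "cls (comps P) (KC (Co \<pi> n))" "cls (comps Q) k" "k = KEc t m \<or> k = KSc \<pi>' m" "barbed_equiv Hidden P Q"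
  shows False
proof (cases \<pi>)
  case Nil
  have "cflag (KC (Co \<pi> n)) NDone KX" using Nil by auto
  then have "weak_barb Hidden P (BIn NDone)" using wbarb_complete assms(1) by (auto simp: Hidden_def)
  then have "weak_barb Hidden Q (BIn NDone)" using beq_wbarb assms(4) by blast
  then obtain k1 k2 where "creach k k1" "cflag k1 NDone k2" using wbarb_sound assms(2) by blast
  then show False using assms(3) by (auto simp: creach_def ctau_KE)
next
  case (Cons u \<pi>2)
  have c1: "ctau (KC (Co \<pi> n)) (KEc u n)" "ctau (KC (Co \<pi> n)) (KSc \<pi>2 n)" using Cons unfolding ctau_def by auto
  have "weak_barb Hidden P (BIn NEnter)" using wbarb_complete2[OF assms(1) c1(1)] by (auto simp: Hidden_def)
  moreover have "weak_barb Hidden P (BIn NSkip)" using wbarb_complete2[OF assms(1) c1(2)] by (auto simp: Hidden_def)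
  ultimately have "weak_barb Hidden Q (BIn NEnter)" "weak_barb Hidden Q (BIn NSkip)" using beq_wbarb assms(4) by blast+
  then obtain k1 k2 k3 k4 where "creach k k1" "cflag k1 NEnter k2" "creach k k3" "cflag k3 NSkip k4"
    using wbarb_sound assms(2) by metis
  then show False using assms(3) by (auto simp: creach_def ctau_KE)
qed


lemma mset_map_out: "mset (map (\<lambda>a. Out a Nil) w) = mset (map (\<lambda>a. Out a Nil) w2) \<Longrightarrow> mset w = mset w2"
proof -
  assume h: "mset (map (\<lambda>a. Out a Nil) w) = mset (map (\<lambda>a. Out a Nil) w2)"
  have "mset (map oa (map (\<lambda>a. Out a Nil) w)) = mset (map oa (map (\<lambda>a. Out a Nil) w2))"
    using h by (simp only: mset_map)
  then show ?thesis by (simp add: comp_def)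
qed

lemma run_test:
  assumes "barbed_equiv Hidden P Q" "cls (comps Q) kq" "set w \<inter> Hidden = {}"
    "mt\<^sup>*\<^sup>* (comps P + comps (tp w)) M1" "cls M1 k1"
  shows "\<exists>P1 Q1 w2 kq'. comps P1 = M1 \<and> barbed_equiv Hidden P1 Q1 \<and> cls (comps Q1) kq' \<and> apath kq w2 kq' \<and> mset w2 = mset w"
proof -
  have "fn (tp w) \<inter> Hidden = {}" using assms(3) by (simp add: fn_tp)
  then have beq: "barbed_equiv Hidden (Par P (tp w)) (Par Q (tp w))"
    using beq_par[OF assms(1)] fv_tp by blast
  have "comps (Par P (tp w)) = comps P + comps (tp w)" by simp
  then obtain P1 where P1: "tau_star (Par P (tp w)) P1" "comps P1 = M1"
    using mt_tau_star[OF assms(4)] by blast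
  obtain Q1 where Q1: "tau_star (Par Q (tp w)) Q1" "barbed_equiv Hidden P1 Q1"
    using beq_tau_star[OF P1(1) beq] by blast
  have mm0: "mt\<^sup>*\<^sup>* (comps (Par Q (tp w))) (comps Q1)" using tau_star_mt[OF Q1(1)] .
  have "comps (Par Q (tp w)) = comps (tp w) + comps Q" by (simp add: add.commute)
  with mm0 have mm: "mt\<^sup>*\<^sup>* (comps (tp w) + comps Q) (comps Q1)" by metis
  have tt: "\<forall>p\<in>#comps (tp w). \<exists>a. p = Out a Nil \<and> a \<notin> Hidden" using assms(3) by (auto simp: comps_tp)
  obtain T' M' w2 kq' where r: "comps Q1 = T' + M'" "cls M' kq'" "apath kq w2 kq'"
     "comps (tp w) = T' + mset (map (\<lambda>a. Out a Nil) w2)"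
    using reach[OF mm assms(2) tt] by blast
  have "T' = {#}"
  proof (rule ccontr)
    assume "T' \<noteq> {#}"
    then obtain p where "p \<in># T'" by auto
    then have "p \<in># comps (tp w)" using r(4) by simp
    then obtain a where "a \<in> set w" "p = Out a Nil" by (auto simp: comps_tp)
    then have a: "Out a Nil \<in># T'" "a \<notin> Hidden" using \<open>p \<in># T'\<close> assms(3) by auto
    then have hb: "has_barb Hidden Q1 (BOut a)" using r(1) by (auto simp: has_barb_mbarb mbarb_def)
    have "barbed_equiv Hidden Q1 P1" using beq_sym[OF Q1(2)] .
    then have "weak_barb Hidden P1 (BOut a)" using beq_barb hb by blast
    then show False using no_out_barb[of P1 k1 a] assms(5) P1(2) by blast
  qed
  then have "mset (map (\<lambda>a. Out a Nil) w) = mset (map (\<lambda>a. Out a Nil) w2)" using r(4) by (simp add: comps_tp)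
  then have "mset w2 = mset w" using mset_map_out by metis
  moreover have "cls (comps Q1) kq'" using r(1,2) \<open>T' = {#}\<close> by simp
  ultimately show ?thesis using P1(2) Q1(2) r(3) by blast
qed

lemma ev_star: "mtau\<^sup>*\<^sup>* (Ev t \<pi> n) D \<Longrightarrow> \<exists>t' \<pi>'. D = Ev t' \<pi>' n"
proof (induction rule: rtranclp_induct)
  case base then show ?case by auto
next
  case (step y z) then show ?case by (auto elim: mtau.cases)
qed

lemma creach_ev: "creach (KC (Ev t \<pi> n)) k \<Longrightarrow> k = KC (Ev t \<pi> n)"
proof (rule ccontr)
  assume h: "creach (KC (Ev t \<pi> n)) k" "k \<noteq> KC (Ev t \<pi> n)"
  then have "ctau (KC (Ev t \<pi> n)) k" unfolding creach_def by blast
  then obtain t' \<pi>' n' where "mtau\<^sup>*\<^sup>* (Ev t \<pi> n) (Co (t' # \<pi>') n')" unfolding ctau_def by blast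
  from ev_star[OF this] show False by blast
qed

lemma creach_co: "creach (KC (Co \<pi> n)) k \<Longrightarrow> k = KC (Co \<pi> n) \<or> (\<exists>t \<pi>'. \<pi> = t # \<pi>' \<and> (k = KEc t n \<or> k = KSc \<pi>' n))"
proof -
  assume h: "creach (KC (Co \<pi> n)) k"
  show ?thesis
  proof (cases "k = KC (Co \<pi> n)")
    case False
    then have "ctau (KC (Co \<pi> n)) k" using h unfolding creach_def by blast
    then obtain t' \<pi>' n' where m: "mtau\<^sup>*\<^sup>* (Co \<pi> n) (Co (t' # \<pi>') n')" "k = KEc t' n' \<or> k = KSc \<pi>' n'"
      unfolding ctau_def by blast
    from co_final[OF m(1)] have "\<pi> = t' # \<pi>'" "n' = n" by auto
    then show ?thesis using m(2) by blast
  qed blast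
qed

lemma flag_KC_only: "creach (KC C) k1 \<Longrightarrow> cflag k1 a k2 \<Longrightarrow> a \<noteq> NEnter \<Longrightarrow> a \<noteq> NSkip \<Longrightarrow> k1 = KC C"
proof (rule ccontr)
  assume h: "creach (KC C) k1" "cflag k1 a k2" "a \<noteq> NEnter" "a \<noteq> NSkip" "k1 \<noteq> KC C"
  then have "ctau (KC C) k1" unfolding creach_def by blast
  then obtain t \<pi> n where "k1 = KEc t n \<or> k1 = KSc \<pi> n" unfolding ctau_def by blast
  then show False using h(2,3,4) by auto
qed

lemma path_fv:
  "apath (KC C) w k' \<Longrightarrow> set w \<subseteq> {NSuc, NZ} \<Longrightarrow> NZ \<in> set w \<Longrightarrow>
    \<exists>g \<pi> n. mtau\<^sup>*\<^sup>* C (Ev (FV g) \<pi> n) \<and> w = replicate g NSuc @ [NZ] \<and> creach (KC (Co \<pi> n)) k'"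
proof (induction w arbitrary: C)
  case Nil then show ?case by simp
next
  case (Cons a w)
  then obtain k1 k2 where k: "creach (KC C) k1" "cflag k1 a k2" "apath k2 w k'" by auto
  have a: "a = NSuc \<or> a = NZ" using Cons.prems by auto
  then have k1: "k1 = KC C" using flag_KC_only k by blast
  from a show ?case
  proof
    assume aS: "a = NSuc"
    then obtain g \<pi> n where g: "mtau\<^sup>*\<^sup>* C (Ev (FV (Suc g)) \<pi> n)" "k2 = KC (Ev (FV g) \<pi> n)"
      using k(2) k1 by auto
    have "NZ \<in> set w" "set w \<subseteq> {NSuc, NZ}" using Cons.prems aS by auto
    then obtain g' \<pi>' n' where ih: "mtau\<^sup>*\<^sup>* (Ev (FV g) \<pi> n) (Ev (FV g') \<pi>' n')" "w = replicate g' NSuc @ [NZ]"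
      "creach (KC (Co \<pi>' n')) k'" using Cons.IH[of "Ev (FV g) \<pi> n"] k(3) g(2) by blast
    then have "g' = g" "\<pi>' = \<pi>" "n' = n" using ev_fv_final by blast+
    then show ?thesis using g(1) ih aS by (intro exI[of _ "Suc g"] exI[of _ \<pi>] exI[of _ n]) auto
  next
    assume aZ: "a = NZ"
    then obtain \<pi> n where g: "mtau\<^sup>*\<^sup>* C (Ev (FV 0) \<pi> n)" "k2 = KC (Co \<pi> n)"
      using k(2) k1 by auto
    have "w = []"
    proof (rule ccontr)
      assume "w \<noteq> []"
      then obtain b w' where "w = b # w'" by (cases w) auto
      then obtain k3 k4 where kk: "creach (KC (Co \<pi> n)) k3" "cflag k3 b k4" using k(3) g(2) by auto
      have "b = NSuc \<or> b = NZ" using Cons.prems \<open>w = b # w'\<close> by auto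
      then have "k3 = KC (Co \<pi> n)" using flag_KC_only kk by blast
      then show False using kk(2) co_final \<open>b = NSuc \<or> b = NZ\<close> by auto
    qed
    then show ?thesis using g k(3) aZ by (intro exI[of _ 0] exI[of _ \<pi>] exI[of _ n]) auto
  qed
qed

lemma P_one:
  assumes "cls M k" "cflag k a k'"
  shows "\<exists>M1. mt\<^sup>*\<^sup>* (M + comps (tp [a])) M1 \<and> cls M1 k'"
proof -
  obtain Ma Mb where h: "mt\<^sup>*\<^sup>* M Ma" "ms Ma (LIn a Nil) Mb" "cls Mb k'" using cls_cflag[OF assms] by blast
  have "mt\<^sup>*\<^sup>* (M + {#Out a Nil#}) (Ma + {#Out a Nil#})" using mt_star_frame[OF h(1)] .
  moreover have "mt (Ma + {#Out a Nil#}) Mb" using comm_test[OF h(2)] .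
  ultimately show ?thesis using h(3) by (auto intro: rtranclp.rtrancl_into_rtrancl)
qed

lemma P_fv:
  "cls M (KC C) \<Longrightarrow> mtau\<^sup>*\<^sup>* C (Ev (FV f) \<pi> n) \<Longrightarrow>
     \<exists>M1. mt\<^sup>*\<^sup>* (M + comps (tp (replicate f NSuc @ [NZ]))) M1 \<and> cls M1 (KC (Co \<pi> n))"
proof (induction f arbitrary: C M)
  case 0
  have "cflag (KC C) NZ (KC (Co \<pi> n))" using 0 by auto
  then show ?case using P_one 0 by auto
next
  case (Suc f)
  have "cflag (KC C) NSuc (KC (Ev (FV f) \<pi> n))" using Suc.prems by auto
  then obtain Ma Mb where h: "mt\<^sup>*\<^sup>* M Ma" "ms Ma (LIn NSuc Nil) Mb" "cls Mb (KC (Ev (FV f) \<pi> n))"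
    using cls_cflag Suc.prems(1) by blast
  obtain M1 where M1: "mt\<^sup>*\<^sup>* (Mb + comps (tp (replicate f NSuc @ [NZ]))) M1" "cls M1 (KC (Co \<pi> n))"
    using Suc.IH[OF h(3)] by blast
  define T where "T = comps (tp (replicate f NSuc @ [NZ]))"
  have "comps (tp (replicate (Suc f) NSuc @ [NZ])) = {#Out NSuc Nil#} + T" unfolding T_def by simp
  moreover have "mt\<^sup>*\<^sup>* (M + ({#Out NSuc Nil#} + T)) (Ma + {#Out NSuc Nil#} + T)"
    using mt_star_frame[OF h(1), of "{#Out NSuc Nil#} + T"] by (simp add: add.assoc)
  moreover have "mt (Ma + {#Out NSuc Nil#} + T) (Mb + T)"
    using ms_frame[OF comm_test[OF h(2), unfolded mt_def], of T] by (simp add: mt_def)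
  ultimately show ?case using M1 unfolding T_def by (metis (no_types, lifting) rtranclp.rtrancl_into_rtrancl rtranclp_trans)
qed


definition Rel :: "conf \<Rightarrow> conf \<Rightarrow> bool" where
  "Rel C1 C2 = (\<exists>P Q. cls (comps P) (KC C1) \<and> cls (comps Q) (KC C2) \<and> barbed_equiv Hidden P Q)"

lemma mset_single: "mset w2 = mset [a] \<Longrightarrow> w2 = [a]"
proof -
  assume h: "mset w2 = mset [a]"
  then have "length w2 = length [a]" by (rule mset_eq_length)
  then obtain b where "w2 = [b]" by (cases w2) auto
  then show ?thesis using h by simp
qed

lemma hid: "NLam \<notin> Hidden" "NEnter \<notin> Hidden" "NSkip \<notin> Hidden" "NDone \<notin> Hidden" "NSuc \<notin> Hidden" "NZ \<notin> Hidden"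
  by (auto simp: Hidden_def)

lemma apath1: "apath k [a] k' \<Longrightarrow> \<exists>k1 k2. creach k k1 \<and> cflag k1 a k2 \<and> creach k2 k'"
  by auto

lemma dir2_step:
  assumes P: "cls (comps P) (KC C1)" and Q: "cls (comps Q) (KC C2)" and PQ: "barbed_equiv Hidden P Q"
    and st: "wstep C1 F C1'"
  shows "\<exists>C2'. wstep C2 F C2' \<and> Rel C1' C2'"
proof -
  from st obtain D1 where D1: "mtau\<^sup>*\<^sup>* C1 D1" "mstep D1 F C1'" unfolding wstep_def by blast
  from D1(2) show ?thesis
  proof cases
    case (1 x t n)
    have "cflag (KC C1) NLam (KC C1')" using D1(1) 1 by auto
    then obtain M1 where M1: "mt\<^sup>*\<^sup>* (comps P + comps (tp [NLam])) M1" "cls M1 (KC C1')" using P_one P by blast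
    have ts: "set [NLam] \<inter> Hidden = {}" using hid by simp
    obtain P1 Q1 w2 kq' where r: "comps P1 = M1" "barbed_equiv Hidden P1 Q1" "cls (comps Q1) kq'" "apath (KC C2) w2 kq'"
      "mset w2 = mset [NLam]" using run_test[OF PQ Q ts M1(1) M1(2)] by blast
    have "w2 = [NLam]" using mset_single r(5) .
    then obtain k1 k2 where k: "creach (KC C2) k1" "cflag k1 NLam k2" "creach k2 kq'" using r(4) by auto
    have "k1 = KC C2" using flag_KC_only[OF k(1,2)] by simp
    then obtain y u m where ym: "mtau\<^sup>*\<^sup>* C2 (Ev (Lam y u) [] m)" "k2 = KC (Ev (tsubst u y (FV m)) [] (Suc m))"
      using k(2) by auto
    have "kq' = k2" using creach_ev k(3) ym(2) by blast
    moreover have "wstep C2 F (Ev (tsubst u y (FV m)) [] (Suc m))" using ym(1) 1 by (blast intro: wstepI mstep.intros)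
    moreover have "cls (comps P1) (KC C1')" using r(1) M1(2) by simp
    ultimately have "cls (comps Q1) (KC (Ev (tsubst u y (FV m)) [] (Suc m)))" "wstep C2 F (Ev (tsubst u y (FV m)) [] (Suc m))"
      "cls (comps P1) (KC C1')" using r(3) ym(2) by simp_all
    then show ?thesis using r(2) unfolding Rel_def by blast
  next
    case (2 f \<pi> n)
    have c: "mtau\<^sup>*\<^sup>* C1 (Ev (FV f) \<pi> n)" using D1(1) 2 by simp
    obtain M1 where M1: "mt\<^sup>*\<^sup>* (comps P + comps (tp (replicate f NSuc @ [NZ]))) M1" "cls M1 (KC (Co \<pi> n))"
      using P_fv[OF P c] by blast
    have "set (replicate f NSuc @ [NZ]) \<inter> Hidden = {}" using hid by auto
    then obtain P1 Q1 w2 kq' where r: "comps P1 = M1" "barbed_equiv Hidden P1 Q1" "cls (comps Q1) kq'" "apath (KC C2) w2 kq'"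
      "mset w2 = mset (replicate f NSuc @ [NZ])" using run_test[OF PQ Q _ M1(1) M1(2)] by blast
    have sw: "set w2 = set (replicate f NSuc @ [NZ])" using r(5) by (metis set_mset_mset)
    then have "set w2 \<subseteq> {NSuc, NZ}" "NZ \<in> set w2" by auto
    then obtain g \<pi>2 n2 where g: "mtau\<^sup>*\<^sup>* C2 (Ev (FV g) \<pi>2 n2)" "w2 = replicate g NSuc @ [NZ]" "creach (KC (Co \<pi>2 n2)) kq'"
      using path_fv r(4) by blast
    have "count (mset w2) NSuc = g" "count (mset (replicate f NSuc @ [NZ])) NSuc = f" using g(2) by simp_all
    then have "g = f" using r(5) by simp
    have P1c: "cls (comps P1) (KC (Co \<pi> n))" using r(1) M1(2) by simp
    have "kq' = KC (Co \<pi>2 n2)"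
    proof (rule ccontr)
      assume "kq' \<noteq> KC (Co \<pi>2 n2)"
      then obtain t \<pi>' where "kq' = KEc t n2 \<or> kq' = KSc \<pi>' n2" using creach_co[OF g(3)] by blast
      then show False using committed_contra[OF P1c r(3) _ r(2)] by blast
    qed
    moreover have "wstep C2 F (Co \<pi>2 n2)" using g(1) 2 \<open>g = f\<close> by (blast intro: wstepI mstep.intros)
    ultimately have "cls (comps Q1) (KC (Co \<pi>2 n2))" "wstep C2 F (Co \<pi>2 n2)" "cls (comps P1) (KC C1')"
      using r(3) P1c 2 by simp_all
    then show ?thesis using r(2) unfolding Rel_def by blast
  next
    case (3 t \<pi> n)
    have "ctau (KC C1) (KEc t n)" using D1(1) 3 unfolding ctau_def by blast
    then obtain M0 where M0: "mt\<^sup>*\<^sup>* (comps P) M0" "cls M0 (KEc t n)" using cls_ctau P by blast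
    have "cflag (KEc t n) NEnter (KC (Ev t [] n))" by simp
    then obtain M1 where M1: "mt\<^sup>*\<^sup>* (M0 + comps (tp [NEnter])) M1" "cls M1 (KC (Ev t [] n))" using P_one M0(2) by blast
    have M1': "mt\<^sup>*\<^sup>* (comps P + comps (tp [NEnter])) M1" using mt_star_frame[OF M0(1)] M1(1) by (meson rtranclp_trans)
    have ts: "set [NEnter] \<inter> Hidden = {}" using hid by simp
    obtain P1 Q1 w2 kq' where r: "comps P1 = M1" "barbed_equiv Hidden P1 Q1" "cls (comps Q1) kq'" "apath (KC C2) w2 kq'"
      "mset w2 = mset [NEnter]" using run_test[OF PQ Q ts M1' M1(2)] by blast
    have "w2 = [NEnter]" using mset_single r(5) .
    then obtain k1 k2 where k: "creach (KC C2) k1" "cflag k1 NEnter k2" "creach k2 kq'" using r(4) by auto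
    have "k1 \<noteq> KC C2" using k(2) by auto
    then have "ctau (KC C2) k1" using k(1) unfolding creach_def by blast
    then obtain t2 \<pi>2 n2 where tt: "mtau\<^sup>*\<^sup>* C2 (Co (t2 # \<pi>2) n2)" "k1 = KEc t2 n2 \<or> k1 = KSc \<pi>2 n2"
      unfolding ctau_def by blast
    then have "k1 = KEc t2 n2" using k(2) by auto
    then have "k2 = KC (Ev t2 [] n2)" using k(2) by auto
    then have "kq' = k2" using creach_ev k(3) by blast
    moreover have "wstep C2 F (Ev t2 [] n2)" using tt(1) 3 by (blast intro: wstepI mstep.intros)
    moreover have "cls (comps P1) (KC C1')" using r(1) M1(2) 3 by simp
    ultimately have "cls (comps Q1) (KC (Ev t2 [] n2))" "wstep C2 F (Ev t2 [] n2)" "cls (comps P1) (KC C1')"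
      using r(3) \<open>k2 = KC (Ev t2 [] n2)\<close> by simp_all
    then show ?thesis using r(2) unfolding Rel_def by blast
  next
    case (4 t \<pi> n)
    have "ctau (KC C1) (KSc \<pi> n)" using D1(1) 4 unfolding ctau_def by blast
    then obtain M0 where M0: "mt\<^sup>*\<^sup>* (comps P) M0" "cls M0 (KSc \<pi> n)" using cls_ctau P by blast
    have "cflag (KSc \<pi> n) NSkip (KC (Co \<pi> n))" by simp
    then obtain M1 where M1: "mt\<^sup>*\<^sup>* (M0 + comps (tp [NSkip])) M1" "cls M1 (KC (Co \<pi> n))" using P_one M0(2) by blast
    have M1': "mt\<^sup>*\<^sup>* (comps P + comps (tp [NSkip])) M1" using mt_star_frame[OF M0(1)] M1(1) by (meson rtranclp_trans)
    have ts: "set [NSkip] \<inter> Hidden = {}" using hid by simp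
    obtain P1 Q1 w2 kq' where r: "comps P1 = M1" "barbed_equiv Hidden P1 Q1" "cls (comps Q1) kq'" "apath (KC C2) w2 kq'"
      "mset w2 = mset [NSkip]" using run_test[OF PQ Q ts M1' M1(2)] by blast
    have "w2 = [NSkip]" using mset_single r(5) .
    then obtain k1 k2 where k: "creach (KC C2) k1" "cflag k1 NSkip k2" "creach k2 kq'" using r(4) by auto
    have "k1 \<noteq> KC C2" using k(2) by auto
    then have "ctau (KC C2) k1" using k(1) unfolding creach_def by blast
    then obtain t2 \<pi>2 n2 where tt: "mtau\<^sup>*\<^sup>* C2 (Co (t2 # \<pi>2) n2)" "k1 = KEc t2 n2 \<or> k1 = KSc \<pi>2 n2"
      unfolding ctau_def by blast
    then have "k1 = KSc \<pi>2 n2" using k(2) by auto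
    then have k2: "k2 = KC (Co \<pi>2 n2)" using k(2) by auto
    have P1c: "cls (comps P1) (KC (Co \<pi> n))" using r(1) M1(2) by simp
    have "kq' = k2"
    proof (rule ccontr)
      assume "kq' \<noteq> k2"
      then obtain t' \<pi>' where "kq' = KEc t' n2 \<or> kq' = KSc \<pi>' n2" using creach_co k(3) k2 by blast
      then show False using committed_contra[OF P1c r(3) _ r(2)] by blast
    qed
    moreover have "wstep C2 F (Co \<pi>2 n2)" using tt(1) 4 by (blast intro: wstepI mstep.intros)
    ultimately have "cls (comps Q1) (KC (Co \<pi>2 n2))" "wstep C2 F (Co \<pi>2 n2)" "cls (comps P1) (KC C1')"
      using r(3) P1c k2 4 by simp_all
    then show ?thesis using r(2) unfolding Rel_def by blast
  qed
qed

lemma dir2_term: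
  assumes P: "cls (comps P) (KC C1)" and Q: "cls (comps Q) (KC C2)" and PQ: "barbed_equiv Hidden P Q"
    and st: "wterm C1 F"
  shows "wterm C2 F"
proof -
  from st obtain D1 where D1: "mtau\<^sup>*\<^sup>* C1 D1" "mterm D1 F" unfolding wterm_def by blast
  then obtain n where n: "D1 = Co [] n" "F = FDone" by (auto elim: mterm.cases)
  have "cflag (KC C1) NDone KX" using D1(1) n by auto
  then have "weak_barb Hidden P (BIn NDone)" using wbarb_complete P hid by blast
  then have "weak_barb Hidden Q (BIn NDone)" using beq_wbarb PQ by blast
  then obtain k1 k2 where k: "creach (KC C2) k1" "cflag k1 NDone k2" using wbarb_sound Q by blast
  then have "k1 = KC C2" using flag_KC_only[OF k] by simp
  then obtain m where "mtau\<^sup>*\<^sup>* C2 (Co [] m)" using k(2) by auto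
  then show ?thesis unfolding wterm_def n by (blast intro: mterm.intros)
qed

lemma dir2:
  assumes "wf_conf C" "wf_conf C'" "barbed_equiv Hidden (tr_conf C) (tr_conf C')"
  shows "mach_bisimilar C C'"
proof (rule mb_intro[where R = Rel])
  show "symp Rel" unfolding symp_def Rel_def using beq_sym by blast
next
  fix C1 C2 F C1' assume a: "Rel C1 C2" "wstep C1 F C1'"
  then obtain P Q where "cls (comps P) (KC C1)" "cls (comps Q) (KC C2)" "barbed_equiv Hidden P Q" unfolding Rel_def by blast
  then show "\<exists>C2'. wstep C2 F C2' \<and> Rel C1' C2'" using dir2_step a(2) by blast
next
  fix C1 C2 F assume a: "Rel C1 C2" "wterm C1 F"
  then obtain P Q where "cls (comps P) (KC C1)" "cls (comps Q) (KC C2)" "barbed_equiv Hidden P Q" unfolding Rel_def by blast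
  then show "wterm C2 F" using dir2_term a(2) by blast
next
  show "Rel C C'" unfolding Rel_def using cls_tr assms by blast
qed

theorem theorem4p14:
  assumes "wf_conf C" and "wf_conf C'"
  shows "mach_bisimilar C C' \<longleftrightarrow> barbed_equiv Hidden (tr_conf C) (tr_conf C')"
  using dir1[OF assms] dir2[OF assms] by blast


end
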